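(* Let $\mathcal H$ be a non-trivial basic hereditary $\mathcal L$-property and let $\mathcal M\in\mathcal H$ be countably infinite. Then for all sufficiently large $n$, the number of $\mathcal N\in\mathcal H_n$ that are compatible with $\mathcal M$ equals $|\Omega^{\mathcal M}([n])|/|\mathrm{Aut}^*(\mathcal M)|$.
   Context: $\mathcal L$ is a finite language of relation and/or constant symbols, of arity $r$ (largest arity of a relation symbol, $0$ if none). A hereditary $\mathcal L$-property is a class of $\mathcal L$-structures closed under isomorphism and substructures; $\mathcal H_n$ is the set of its members with universe $[n]$; it is non-trivial if $\mathcal H_n\neq\emptyset$ for infinitely many $n$. For an $\mathcal L$-structure and $a,b$ in it, $a\sim b$ iff the transposition of $a,b$ (fixing all other elements) is an automorphism; $\mathcal H$ is basic if the number of $\sim$-classes of its members is uniformly bounded. Since $\mathcal M$ has finitely many $\sim$-classes, enumerate them as $A_1,\dots,A_k$ with $|A_1|\le\dots\le|A_k|$; let $t$ be the number of finite classes (so $A_1,\dots,A_t$ are exactly the finite ones) and $K=\max\{r,|A_t|\}$ (with $K=r$ if $t=0$). For a set $X$, $\Omega^{\mathcal M}(X)$ is the set of ordered partitions $(X_1,\dots,X_k)$ of $X$ with $|X_i|=|A_i|$ for $i\le t$ and $|X_i|>K$ for $t<i\le k$. An $\mathcal L$-structure $\mathcal N$ is compatible with $\mathcal M$ if there is $(B_1,\dots,B_k)\in\Omega^{\mathcal M}(N)$ such that for every atomic formula $\tau(x_1,\dots,x_s)$ and all tuples $(b_1,\dots,b_s)$ of pairwise distinct elements of $N$ and $(a_1,\dots,a_s)$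 of pairwise distinct elements of $M$ with $b_j\in B_i\iff a_j\in A_i$ for all $i,j$, we have $\mathcal N\models\tau(\bar b)$ iff $\mathcal M\models\tau(\bar a)$. $\mathrm{Aut}^*(\mathcal M)$ is the set of permutations $\sigma$ of $[k]$ for which there is an automorphism $f$ of $\mathcal M$ with $f(A_i)=A_{\sigma(i)}$ for all $i\in[k]$. *)

theory Defs
  imports Complex_Main "HOL-Combinatorics.Permutations"
begin

text \<open>A finite language: relation symbols Rels (arities ar), constant symbols Cs.
  Structures have universe a subset of nat (every countable structure is isomorphic to one).\<close>

datatype ('r,'c) struc = Struc (univ: "nat set") (rel: "'r \<Rightarrow> nat list \<Rightarrow> bool") (cst: "'c \<Rightarrow> nat")

definition wf_struc :: "'r set \<Rightarrow> ('r \<Rightarrow> nat) \<Rightarrow> 'c set \<Rightarrow> ('r,'c) struc \<Rightarrow> bool" where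
  "wf_struc Rels ar Cs S \<longleftrightarrow>
     (\<forall>r xs. rel S r xs \<longrightarrow> r \<in> Rels \<and> length xs = ar r \<and> set xs \<subseteq> univ S) \<and>
     (\<forall>c\<in>Cs. cst S c \<in> univ S) \<and> (\<forall>c. c \<notin> Cs \<longrightarrow> cst S c = undefined)"

definition iso_map :: "'r set \<Rightarrow> 'c set \<Rightarrow> ('r,'c) struc \<Rightarrow> ('r,'c) struc \<Rightarrow> (nat \<Rightarrow> nat) \<Rightarrow> bool" where
  "iso_map Rels Cs S S' f \<longleftrightarrow> bij_betw f (univ S) (univ S') \<and>
     (\<forall>r\<in>Rels. \<forall>xs. set xs \<subseteq> univ S \<longrightarrow> rel S' r (map f xs) = rel S r xs) \<and>
     (\<forall>c\<in>Cs. f (cst S c) = cst S' c)"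

definition isomorphic :: "'r set \<Rightarrow> 'c set \<Rightarrow> ('r,'c) struc \<Rightarrow> ('r,'c) struc \<Rightarrow> bool" where
  "isomorphic Rels Cs S S' \<longleftrightarrow> (\<exists>f. iso_map Rels Cs S S' f)"

definition substructure :: "'r set \<Rightarrow> 'c set \<Rightarrow> ('r,'c) struc \<Rightarrow> ('r,'c) struc \<Rightarrow> bool" where
  "substructure Rels Cs S' S \<longleftrightarrow> univ S' \<subseteq> univ S \<and> (\<forall>c\<in>Cs. cst S' c = cst S c) \<and>
     (\<forall>r\<in>Rels. \<forall>xs. rel S' r xs = (rel S r xs \<and> set xs \<subseteq> univ S'))"

definition hereditary :: "'r set \<Rightarrow> ('r \<Rightarrow> nat) \<Rightarrow> 'c set \<Rightarrow> ('r,'c) struc set \<Rightarrow> bool" where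
  "hereditary Rels ar Cs H \<longleftrightarrow> (\<forall>S\<in>H. wf_struc Rels ar Cs S) \<and>
     (\<forall>S\<in>H. \<forall>S'. wf_struc Rels ar Cs S' \<and> isomorphic Rels Cs S S' \<longrightarrow> S' \<in> H) \<and>
     (\<forall>S\<in>H. \<forall>S'. wf_struc Rels ar Cs S' \<and> substructure Rels Cs S' S \<longrightarrow> S' \<in> H)"

definition Hn :: "('r,'c) struc set \<Rightarrow> nat \<Rightarrow> ('r,'c) struc set" where
  "Hn H n = {S \<in> H. univ S = {1..n}}"

definition nontrivial :: "('r,'c) struc set \<Rightarrow> bool" where
  "nontrivial H \<longleftrightarrow> infinite {n. Hn H n \<noteq> {}}"

definition transp_fun :: "nat \<Rightarrow> nat \<Rightarrow> nat \<Rightarrow> nat" where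
  "transp_fun a b = (\<lambda>x. if x = a then b else if x = b then a else x)"

definition sim :: "'r set \<Rightarrow> 'c set \<Rightarrow> ('r,'c) struc \<Rightarrow> nat \<Rightarrow> nat \<Rightarrow> bool" where
  "sim Rels Cs S a b \<longleftrightarrow> a \<in> univ S \<and> b \<in> univ S \<and> iso_map Rels Cs S S (transp_fun a b)"

definition sim_classes :: "'r set \<Rightarrow> 'c set \<Rightarrow> ('r,'c) struc \<Rightarrow> nat set set" where
  "sim_classes Rels Cs S = univ S // {(a,b). sim Rels Cs S a b}"

definition basic :: "'r set \<Rightarrow> 'c set \<Rightarrow> ('r,'c) struc set \<Rightarrow> bool" where
  "basic Rels Cs H \<longleftrightarrow> (\<exists>B::nat. \<forall>S\<in>H. finite (sim_classes Rels Cs S) \<and> card (sim_classes Rels Cs S) \<le> B)"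

definition max_arity :: "'r set \<Rightarrow> ('r \<Rightarrow> nat) \<Rightarrow> nat" where
  "max_arity Rels ar = Max (insert 0 (ar ` Rels))"

text \<open>A (0-based) enumeration A 0, ..., A (k-1) of the classes of M with nondecreasing
  cardinalities (all sets here are countable, so infinite ones have equal cardinality).\<close>
definition class_enum :: "'r set \<Rightarrow> 'c set \<Rightarrow> ('r,'c) struc \<Rightarrow> (nat \<Rightarrow> nat set) \<Rightarrow> nat \<Rightarrow> bool" where
  "class_enum Rels Cs M A k \<longleftrightarrow> bij_betw A {..<k} (sim_classes Rels Cs M) \<and>
     (\<forall>i j. i < j \<and> j < k \<and> finite (A j) \<longrightarrow> finite (A i) \<and> card (A i) \<le> card (A j))"

definition num_fin :: "(nat \<Rightarrow> nat set) \<Rightarrow> nat \<Rightarrow> nat" where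
  "num_fin A k = card {i. i < k \<and> finite (A i)}"

definition Kval :: "'r set \<Rightarrow> ('r \<Rightarrow> nat) \<Rightarrow> (nat \<Rightarrow> nat set) \<Rightarrow> nat \<Rightarrow> nat" where
  "Kval Rels ar A k = (if num_fin A k = 0 then max_arity Rels ar
                       else max (max_arity Rels ar) (card (A (num_fin A k - 1))))"

text \<open>Ordered partitions (X 0, ..., X (k-1)) of X; entries beyond k are fixed to {}.\<close>
definition Omega :: "'r set \<Rightarrow> ('r \<Rightarrow> nat) \<Rightarrow> (nat \<Rightarrow> nat set) \<Rightarrow> nat \<Rightarrow> nat set \<Rightarrow> (nat \<Rightarrow> nat set) set" where
  "Omega Rels ar A k X = {Xs.
     (\<forall>i<k. Xs i \<subseteq> X) \<and> (\<forall>i<k. \<forall>j<k. i \<noteq> j \<longrightarrow> Xs i \<inter> Xs j = {}) \<and> (\<Union>i<k. Xs i) = X \<and>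
     (\<forall>i<num_fin A k. card (Xs i) = card (A i)) \<and>
     (\<forall>i. num_fin A k \<le> i \<and> i < k \<longrightarrow> card (Xs i) > Kval Rels ar A k) \<and>
     (\<forall>i\<ge>k. Xs i = {})}"

datatype 'c trm = V nat | C 'c
datatype ('r,'c) atm = R 'r "'c trm list" | Eq "'c trm" "'c trm"

fun tval :: "('r,'c) struc \<Rightarrow> nat list \<Rightarrow> 'c trm \<Rightarrow> nat" where
  "tval S bs (V i) = bs ! i"
| "tval S bs (C c) = cst S c"

fun holds :: "('r,'c) struc \<Rightarrow> ('r,'c) atm \<Rightarrow> nat list \<Rightarrow> bool" where
  "holds S (R r ts) bs = rel S r (map (tval S bs) ts)"
| "holds S (Eq t u) bs = (tval S bs t = tval S bs u)"

fun trm_ok :: "'c set \<Rightarrow> nat \<Rightarrow> 'c trm \<Rightarrow> bool" where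
  "trm_ok Cs s (V i) = (i < s)"
| "trm_ok Cs s (C c) = (c \<in> Cs)"

fun atom_ok :: "'r set \<Rightarrow> ('r \<Rightarrow> nat) \<Rightarrow> 'c set \<Rightarrow> nat \<Rightarrow> ('r,'c) atm \<Rightarrow> bool" where
  "atom_ok Rels ar Cs s (R r ts) = (r \<in> Rels \<and> length ts = ar r \<and> (\<forall>t\<in>set ts. trm_ok Cs s t))"
| "atom_ok Rels ar Cs s (Eq t u) = (trm_ok Cs s t \<and> trm_ok Cs s u)"

definition compatible :: "'r set \<Rightarrow> ('r \<Rightarrow> nat) \<Rightarrow> 'c set \<Rightarrow> ('r,'c) struc \<Rightarrow> (nat \<Rightarrow> nat set) \<Rightarrow> nat \<Rightarrow> ('r,'c) struc \<Rightarrow> bool" where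
  "compatible Rels ar Cs M A k N \<longleftrightarrow> (\<exists>Bs\<in>Omega Rels ar A k (univ N).
     \<forall>\<tau> bs as. atom_ok Rels ar Cs (length bs) \<tau> \<and> length as = length bs \<and>
        distinct bs \<and> distinct as \<and> set bs \<subseteq> univ N \<and> set as \<subseteq> univ M \<and>
        (\<forall>i<k. \<forall>j<length bs. (bs ! j \<in> Bs i) = (as ! j \<in> A i))
        \<longrightarrow> (holds N \<tau> bs = holds M \<tau> as))"

definition AutStar :: "'r set \<Rightarrow> 'c set \<Rightarrow> ('r,'c) struc \<Rightarrow> (nat \<Rightarrow> nat set) \<Rightarrow> nat \<Rightarrow> (nat \<Rightarrow> nat) set" where
  "AutStar Rels Cs M A k = {\<sigma>. \<sigma> permutes {..<k} \<and>
     (\<exists>f. iso_map Rels Cs M M f \<and> (\<forall>i<k. f ` A i = A (\<sigma> i)))}"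

end

theory Submission
  imports Defs "HOL-Library.Infinite_Set"
begin


lemma transp_simps[simp]:
  "transp_fun a b a = b" "transp_fun a b b = a"
  "x \<noteq> a \<Longrightarrow> x \<noteq> b \<Longrightarrow> transp_fun a b x = x"
  by (auto simp: transp_fun_def)

lemma transp_invol[simp]: "transp_fun a b (transp_fun a b x) = x"
  by (auto simp: transp_fun_def)

lemma transp_swap: "transp_fun a b = transp_fun b a"
  by (auto simp: transp_fun_def fun_eq_iff)

lemma transp_bij: "a \<in> S \<Longrightarrow> b \<in> S \<Longrightarrow> bij_betw (transp_fun a b) S S"
  by (rule bij_betwI[where g="transp_fun a b"]) (auto simp: transp_fun_def)

lemma transp_inj: "inj (transp_fun a b)"
  by (metis injI transp_invol)

lemma disjD:
  assumes "\<forall>i<k. \<forall>j<k. i \<noteq> j \<longrightarrow> P i \<inter> P j = {}" "i < k" "j < k" "x \<in> P i" "x \<in> P j"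
  shows "i = j"
proof (rule ccontr)
  assume "i \<noteq> j"
  then have "P i \<inter> P j = {}" using assms(1-3) by simp
  then show False using assms(4,5) by blast
qed

lemma transp_inj_on: "inj_on (transp_fun a b) S"
  using inj_on_subset[OF transp_inj subset_UNIV] .

lemma transp_mem:
  assumes "a \<in> P i" "b \<in> P i" "\<forall>i<k. \<forall>j<k. i \<noteq> j \<longrightarrow> P i \<inter> P j = {}" "i < k" "l < k"
  shows "transp_fun a b x \<in> P l \<longleftrightarrow> x \<in> P l"
  using assms unfolding transp_fun_def by (cases "l = i") auto

locale cx =
  fixes Rels :: "'r set" and ar :: "'r \<Rightarrow> nat" and Cs :: "'c set"
    and M :: "('r,'c) struc" and A :: "nat \<Rightarrow> nat set" and k :: nat
  assumes finR: "finite Rels" and wfM: "wf_struc Rels ar Cs M"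
    and ce: "class_enum Rels Cs M A k"
begin

abbreviation "aut f \<equiv> iso_map Rels Cs M M f"
abbreviation "sm \<equiv> sim Rels Cs M"
definition "sr = {(a,b). sm a b}"

lemma aut_id: "aut id"
  by (simp add: iso_map_def)

lemma aut_comp: "aut f \<Longrightarrow> aut g \<Longrightarrow> aut (g \<circ> f)"
  unfolding iso_map_def
proof (intro conjI ballI allI impI)
  assume f: "bij_betw f (univ M) (univ M) \<and>
    (\<forall>r\<in>Rels. \<forall>xs. set xs \<subseteq> univ M \<longrightarrow> rel M r (map f xs) = rel M r xs) \<and> (\<forall>c\<in>Cs. f (cst M c) = cst M c)"
    and g: "bij_betw g (univ M) (univ M) \<and>
    (\<forall>r\<in>Rels. \<forall>xs. set xs \<subseteq> univ M \<longrightarrow> rel M r (map g xs) = rel M r xs) \<and> (\<forall>c\<in>Cs. g (cst M c) = cst M c)"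
  show "bij_betw (g \<circ> f) (univ M) (univ M)" using f g bij_betw_trans by blast
  fix r xs assume r: "r \<in> Rels" and xs: "set xs \<subseteq> univ M"
  have "set (map f xs) \<subseteq> univ M" using xs f by (auto simp: bij_betw_def)
  then have "rel M r (map g (map f xs)) = rel M r (map f xs)" using g r by blast
  then show "rel M r (map (g \<circ> f) xs) = rel M r xs" using f r xs by simp
next
  fix c assume "c \<in> Cs"
  assume f: "bij_betw f (univ M) (univ M) \<and>
    (\<forall>r\<in>Rels. \<forall>xs. set xs \<subseteq> univ M \<longrightarrow> rel M r (map f xs) = rel M r xs) \<and> (\<forall>c\<in>Cs. f (cst M c) = cst M c)"
    and g: "bij_betw g (univ M) (univ M) \<and>
    (\<forall>r\<in>Rels. \<forall>xs. set xs \<subseteq> univ M \<longrightarrow> rel M r (map g xs) = rel M r xs) \<and> (\<forall>c\<in>Cs. g (cst M c) = cst M c)"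
  then show "(g \<circ> f) (cst M c) = cst M c" using \<open>c \<in> Cs\<close> by simp
qed

lemma sim_refl: "x \<in> univ M \<Longrightarrow> sm x x"
proof -
  have "transp_fun x x = id" by (auto simp: transp_fun_def)
  then show "x \<in> univ M \<Longrightarrow> sm x x" using aut_id by (simp add: sim_def)
qed

lemma sim_sym: "sm a b \<Longrightarrow> sm b a"
  by (auto simp: sim_def transp_swap)

lemma sim_trans: assumes "sm a b" "sm b c" shows "sm a c"
proof -
  have ab: "a \<in> univ M" "b \<in> univ M" "c \<in> univ M" using assms by (auto simp: sim_def)
  show ?thesis
  proof (cases "a = c \<or> a = b \<or> b = c")
    case True then show ?thesis using assms sim_refl ab by auto
  next
    case False
    have eq: "transp_fun a c = transp_fun a b \<circ> (transp_fun b c \<circ> transp_fun a b)"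
      using False by (auto simp: transp_fun_def fun_eq_iff)
    have "aut (transp_fun a b)" "aut (transp_fun b c)" using assms by (auto simp: sim_def)
    then have "aut (transp_fun a c)" unfolding eq by (intro aut_comp)
    then show ?thesis using ab by (simp add: sim_def)
  qed
qed

lemma equiv_sr: "equiv (univ M) sr"
proof (rule equivI)
  show "sr \<subseteq> univ M \<times> univ M" unfolding sr_def sim_def by auto
  show "refl_on (univ M) sr" unfolding refl_on_def sr_def using sim_refl by auto
  show "sym sr" unfolding sym_def sr_def using sim_sym by auto
  show "trans sr" unfolding trans_def sr_def using sim_trans by blast
qed

lemma bijA: "bij_betw A {..<k} (univ M // sr)"
  using ce unfolding class_enum_def sim_classes_def sr_def by simp

lemma A_quot: "i < k \<Longrightarrow> A i \<in> univ M // sr"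
  using bijA by (auto simp: bij_betw_def)

lemma A_sub: "i < k \<Longrightarrow> A i \<subseteq> univ M"
  using A_quot equiv_sr by (metis Union_quotient Union_upper)

lemma A_ne: "i < k \<Longrightarrow> A i \<noteq> {}"
  using A_quot equiv_sr in_quotient_imp_non_empty by blast

lemma A_sim: "i < k \<Longrightarrow> x \<in> A i \<Longrightarrow> y \<in> A i \<Longrightarrow> sm x y"
  using A_quot equiv_sr quotient_eq_iff unfolding sr_def by fastforce

lemma A_closed: "i < k \<Longrightarrow> x \<in> A i \<Longrightarrow> sm x y \<Longrightarrow> y \<in> A i"
  using A_quot[of i] equiv_sr in_quotient_imp_closed unfolding sr_def by fastforce

lemma A_disj: "\<forall>i<k. \<forall>j<k. i \<noteq> j \<longrightarrow> A i \<inter> A j = {}"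
proof (intro allI impI)
  fix i j assume "i < k" "j < k" "i \<noteq> j"
  then have "A i \<noteq> A j" using bijA by (auto simp: bij_betw_def inj_on_def)
  then show "A i \<inter> A j = {}" using quotient_disj[OF equiv_sr A_quot A_quot] \<open>i<k\<close> \<open>j<k\<close> by blast
qed

lemma A_cover: "x \<in> univ M \<Longrightarrow> \<exists>i<k. x \<in> A i"
proof -
  assume "x \<in> univ M"
  then obtain X where "X \<in> univ M // sr" "x \<in> X" using Union_quotient[OF equiv_sr] by blast
  then obtain i where "i < k" "X = A i" using bijA by (auto simp: bij_betw_def)
  then show ?thesis using \<open>x \<in> X\<close> by blast
qed

lemma A_Union: "(\<Union>i<k. A i) = univ M"
  using A_sub A_cover by blast

lemma A_uniq: "i < k \<Longrightarrow> j < k \<Longrightarrow> x \<in> A i \<Longrightarrow> x \<in> A j \<Longrightarrow> i = j"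
  by (rule disjD[OF A_disj])

end


lemma tval_in:
  assumes "wf_struc Rels ar Cs S" "trm_ok Cs (length xs) t" "set xs \<subseteq> univ S"
  shows "tval S xs t \<in> univ S"
  using assms by (cases t) (auto simp: wf_struc_def)

context cx
begin

lemma tval_aut:
  assumes "aut f" "trm_ok Cs (length xs) t"
  shows "tval M (map f xs) t = f (tval M xs t)"
  using assms by (cases t) (auto simp: iso_map_def)

lemma holds_aut:
  assumes f: "aut f" and ok: "atom_ok Rels ar Cs (length xs) \<tau>" and xs: "set xs \<subseteq> univ M"
  shows "holds M \<tau> (map f xs) = holds M \<tau> xs"
proof (cases \<tau>)
  case (R r ts)
  have tv: "map (tval M (map f xs)) ts = map f (map (tval M xs) ts)"
    using ok R tval_aut[OF f] by auto
  have st: "set (map (tval M xs) ts) \<subseteq> univ M"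
    using ok R tval_in[OF wfM _ xs] by auto
  have rr: "r \<in> Rels" using ok R by simp
  have rl: "rel M r (map f (map (tval M xs) ts)) = rel M r (map (tval M xs) ts)"
    using f rr st unfolding iso_map_def by blast
  show ?thesis by (simp only: R holds.simps tv rl)
next
  case (Eq t u)
  have "tval M xs t \<in> univ M" "tval M xs u \<in> univ M"
    using ok Eq tval_in[OF wfM _ xs] by auto
  moreover have "inj_on f (univ M)" using f by (simp add: iso_map_def bij_betw_def)
  ultimately show ?thesis using Eq ok tval_aut[OF f] by (auto simp: inj_on_def)
qed

lemma aut_bij: "aut f \<Longrightarrow> bij_betw f (univ M) (univ M)"
  by (simp add: iso_map_def)

lemma sim_aut_ex:
  "list_all2 sm xs ys \<Longrightarrow> distinct xs \<Longrightarrow> distinct ys \<Longrightarrow>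
   \<exists>f. aut f \<and> map f xs = ys \<and> (\<forall>x\<in>univ M. sm x (f x))"
proof (induction xs arbitrary: ys)
  case Nil
  then show ?case using aut_id sim_refl by auto
next
  case (Cons x xs ys0)
  then obtain y ys where ys0: "ys0 = y # ys" and xy: "sm x y" and rest: "list_all2 sm xs ys"
    by (cases ys0) auto
  from Cons.IH[OF rest] Cons.prems ys0 obtain f where f: "aut f" "map f xs = ys" "\<forall>x\<in>univ M. sm x (f x)"
    by auto
  have xM: "x \<in> univ M" using xy by (simp add: sim_def)
  have fx: "sm (f x) y" using f(3) xM xy sim_sym sim_trans by blast
  define t where "t = transp_fun (f x) y"
  have t: "aut t" using fx by (simp add: sim_def t_def)
  have injf: "inj_on f (univ M)" using f(1) aut_bij bij_betw_def by blast
  have setxs: "set xs \<subseteq> univ M" using rest by (induction rule: list_all2_induct) (auto simp: sim_def)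
  have fxn: "f x \<notin> set ys"
  proof
    assume "f x \<in> set ys"
    then obtain z where "z \<in> set xs" "f z = f x" using f(2) by auto
    then have "z = x" using injf setxs xM by (auto simp: inj_on_def)
    then show False using Cons.prems \<open>z \<in> set xs\<close> by auto
  qed
  have yn: "y \<notin> set ys" using Cons.prems ys0 by auto
  have "map (t \<circ> f) xs = ys"
  proof -
    have "map (t \<circ> f) xs = map t ys" by (simp add: f(2)[symmetric])
    also have "\<dots> = ys" using fxn yn by (induction ys) (auto simp: t_def)
    finally show ?thesis .
  qed
  moreover have "(t \<circ> f) x = y" by (simp add: t_def)
  moreover have "\<forall>z\<in>univ M. sm z ((t \<circ> f) z)"
  proof
    fix z assume z: "z \<in> univ M"
    show "sm z ((t \<circ> f) z)"
    proof (cases "f z = f x \<or> f z = y")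
      case True
      then show ?thesis
      proof
        assume "f z = f x"
        then have "z = x" using injf z xM by (auto simp: inj_on_def)
        then show ?thesis using xy by (simp add: t_def)
      next
        assume fz: "f z = y"
        then have "(t \<circ> f) z = f x" by (simp add: t_def)
        moreover have "sm z y" using f(3) z fz by metis
        ultimately show ?thesis using fx sim_sym sim_trans by metis
      qed
    next
      case False
      then show ?thesis using f(3) z by (simp add: t_def)
    qed
  qed
  ultimately show ?case using aut_comp[OF f(1) t] ys0 by auto
qed

lemma homog:
  assumes "distinct xs" "distinct ys" "length xs = length ys" "set xs \<subseteq> univ M" "set ys \<subseteq> univ M"
    and pat: "\<forall>j<length xs. \<forall>i<k. xs ! j \<in> A i \<longleftrightarrow> ys ! j \<in> A i"
    and ok: "atom_ok Rels ar Cs (length xs) \<tau>"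
  shows "holds M \<tau> xs = holds M \<tau> ys"
proof -
  have "list_all2 sm xs ys"
  proof (rule list_all2_all_nthI)
    show "length xs = length ys" by fact
    fix j assume j: "j < length xs"
    then have "xs ! j \<in> univ M" using assms(4) by auto
    then obtain i where "i < k" "xs ! j \<in> A i" using A_cover by blast
    then show "sm (xs ! j) (ys ! j)" using pat j A_sim by blast
  qed
  then obtain f where f: "aut f" "map f xs = ys" using sim_aut_ex assms by blast
  show ?thesis using holds_aut[OF f(1) ok assms(4)] f(2) by simp
qed

definition "nf = num_fin A k"
definition "KK = Kval Rels ar A k"
definition "LL = max (max_arity Rels ar) 1"

lemma fin_down: "i < j \<Longrightarrow> j < k \<Longrightarrow> finite (A j) \<Longrightarrow> finite (A i) \<and> card (A i) \<le> card (A j)"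
  using ce unfolding class_enum_def by blast

lemma fin_iff: assumes "i < k" shows "finite (A i) \<longleftrightarrow> i < nf"
proof -
  define S where "S = {i. i < k \<and> finite (A i)}"
  have fS: "finite S" unfolding S_def by auto
  have nfS: "nf = card S" unfolding nf_def num_fin_def S_def by simp
  show ?thesis
  proof
    assume "finite (A i)"
    then have "{..i} \<subseteq> S" using assms fin_down unfolding S_def
      by (auto simp: order.order_iff_strict)
    then have "card {..i} \<le> card S" using fS card_mono by blast
    then show "i < nf" using nfS by simp
  next
    assume "i < nf"
    show "finite (A i)"
    proof (rule ccontr)
      assume ni: "infinite (A i)"
      have "S \<subseteq> {..<i}"
      proof
        fix j assume "j \<in> S"
        then have "j < k" "finite (A j)" unfolding S_def by auto
        then show "j \<in> {..<i}" using ni fin_down[of i j] assms by (cases "i < j") (auto simp: not_less order.order_iff_strict)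
      qed
      then have "card S \<le> i" using card_mono[of "{..<i}" S] by simp
      then show False using \<open>i < nf\<close> nfS by simp
    qed
  qed
qed

lemma nf_le: "nf \<le> k"
  unfolding nf_def num_fin_def using card_mono[of "{..<k}" "{i. i < k \<and> finite (A i)}"] by auto

lemma card_fin_le_K: assumes "i < nf" shows "card (A i) \<le> KK"
proof -
  have nf0: "num_fin A k \<noteq> 0" using assms nf_def by simp
  have "nf - 1 < k" using assms nf_le by simp
  have fin: "finite (A (nf - 1))" using fin_iff[OF \<open>nf - 1 < k\<close>] assms by simp
  have "card (A i) \<le> card (A (nf - 1))"
  proof (cases "i < nf - 1")
    case True then show ?thesis using fin_down[of i "nf - 1"] fin \<open>nf - 1 < k\<close> by blast
  next
    case False then have "i = nf - 1" using assms by simp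
    then show ?thesis by simp
  qed
  then show ?thesis unfolding KK_def Kval_def using nf0 nf_def by simp
qed

lemma ma_le_K: "max_arity Rels ar \<le> KK"
  unfolding KK_def Kval_def by auto

lemma ar_le: "r \<in> Rels \<Longrightarrow> ar r \<le> max_arity Rels ar"
  unfolding max_arity_def using finR by (auto intro: Max_ge)

lemma LL_le: "LL \<le> KK + 1"
  unfolding LL_def using ma_le_K by simp

end




lemma glue:
  assumes disjP: "\<forall>i<k. \<forall>j<k. i \<noteq> j \<longrightarrow> P i \<inter> P j = {}"
    and disjQ: "\<forall>i<k. \<forall>j<k. i \<noteq> j \<longrightarrow> Q i \<inter> Q j = {}"
    and F: "\<forall>l<k. inj_on (F l) (P l) \<and> F l ` P l \<subseteq> Q l"
  shows "\<exists>G. (\<forall>l<k. \<forall>x\<in>P l. G x = F l x) \<and> inj_on G (\<Union>l<k. P l)"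
proof -
  define G where "G x = F (SOME l. l < k \<and> x \<in> P l) x" for x
  have Gl: "G x = F l x" if "l < k" "x \<in> P l" for l x
  proof -
    have "(SOME l. l < k \<and> x \<in> P l) = l"
    proof (rule some_equality)
      show "l < k \<and> x \<in> P l" using that by simp
      fix l' assume "l' < k \<and> x \<in> P l'"
      then show "l' = l" using disjD[OF disjP, of l' l x] that by blast
    qed
    then show ?thesis by (simp add: G_def)
  qed
  have "inj_on G (\<Union>l<k. P l)"
  proof (rule inj_onI)
    fix x y assume x: "x \<in> (\<Union>l<k. P l)" and y: "y \<in> (\<Union>l<k. P l)" and e: "G x = G y"
    from x obtain l where l: "l < k" "x \<in> P l" by blast
    from y obtain l' where l': "l' < k" "y \<in> P l'" by blast
    have q1: "F l x \<in> Q l" "F l' y \<in> Q l'" using F l l' by auto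
    have q2: "F l x = F l' y"
    proof -
      have g1: "G x = F l x" by (rule Gl[OF l])
      have g2: "G y = F l' y" by (rule Gl[OF l'])
      show ?thesis using e unfolding g1 g2 .
    qed
    have "l = l'" using disjD[OF disjQ l(1) l'(1), of "F l x"] q1 q2 by simp
    then have "F l x = F l y" using \<open>F l x = F l' y\<close> by simp
    moreover have "inj_on (F l) (P l)" using F l(1) by blast
    ultimately show "x = y" using l l' \<open>l = l'\<close> by (metis inj_on_def)
  qed
  then show ?thesis using Gl by blast
qed

lemma glue_bij:
  assumes disjP: "\<forall>i<k. \<forall>j<k. i \<noteq> j \<longrightarrow> P i \<inter> P j = {}"
    and disjQ: "\<forall>i<k. \<forall>j<k. i \<noteq> j \<longrightarrow> Q i \<inter> Q j = {}"
    and F: "\<forall>l<k. bij_betw (F l) (P l) (Q l)"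
  shows "\<exists>G. (\<forall>l<k. \<forall>x\<in>P l. G x = F l x) \<and> bij_betw G (\<Union>l<k. P l) (\<Union>l<k. Q l)"
proof -
  have "\<forall>l<k. inj_on (F l) (P l) \<and> F l ` P l \<subseteq> Q l" using F by (auto simp: bij_betw_def)
  from glue[OF disjP disjQ this] obtain G where G: "\<forall>l<k. \<forall>x\<in>P l. G x = F l x" "inj_on G (\<Union>l<k. P l)"
    by blast
  have "G ` (\<Union>l<k. P l) = (\<Union>l<k. Q l)"
  proof -
    have "G ` (\<Union>l<k. P l) = (\<Union>l<k. G ` P l)" by auto
    also have "\<dots> = (\<Union>l<k. F l ` P l)" using G(1) by (intro SUP_cong refl image_cong) auto
    also have "\<dots> = (\<Union>l<k. Q l)" using F by (simp add: bij_betw_def)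
    finally show ?thesis .
  qed
  then show ?thesis using G by (auto simp: bij_betw_def)
qed

lemma pat_iff:
  assumes disjQ: "\<forall>i<k. \<forall>j<k. i \<noteq> j \<longrightarrow> Q i \<inter> Q j = {}"
    and cov: "\<exists>l'<k. x \<in> P l'"
    and h: "\<forall>l<k. x \<in> P l \<longrightarrow> h x \<in> Q l"
    and disjP: "\<forall>i<k. \<forall>j<k. i \<noteq> j \<longrightarrow> P i \<inter> P j = {}"
    and l: "l < k"
  shows "h x \<in> Q l \<longleftrightarrow> x \<in> P l"
proof
  assume "h x \<in> Q l"
  from cov obtain l' where "l' < k" "x \<in> P l'" by blast
  then have "h x \<in> Q l'" using h by blast
  then have "l = l'" using disjD[OF disjQ l \<open>l' < k\<close>, of "h x"] \<open>h x \<in> Q l\<close> by simp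
  then show "x \<in> P l" using \<open>x \<in> P l'\<close> by simp
next
  assume "x \<in> P l" then show "h x \<in> Q l" using h l by blast
qed

lemma idx_repr: "set xs \<subseteq> set ds \<Longrightarrow> \<exists>idx. xs = map (nth ds) idx \<and> (\<forall>i\<in>set idx. i < length ds)"
proof (induction xs)
  case Nil then show ?case by auto
next
  case (Cons x xs)
  then obtain idx where "xs = map (nth ds) idx" "\<forall>i\<in>set idx. i < length ds" by auto
  moreover obtain i where "i < length ds" "ds ! i = x" using Cons.prems by (auto simp: in_set_conv_nth)
  ultimately show ?case by (intro exI[of _ "i # idx"]) auto
qed

lemma holds_idx: "holds S (R r (map V idx)) ds = rel S r (map (nth ds) idx)"
  by (simp add: comp_def)

context cx
begin

lemma omD:
  assumes "Xs \<in> Omega Rels ar A k X"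
  shows "\<And>i. i < k \<Longrightarrow> Xs i \<subseteq> X"
    and "\<forall>i<k. \<forall>j<k. i \<noteq> j \<longrightarrow> Xs i \<inter> Xs j = {}"
    and "(\<Union>i<k. Xs i) = X"
    and "\<And>i. i < nf \<Longrightarrow> card (Xs i) = card (A i)"
    and "\<And>i. nf \<le> i \<Longrightarrow> i < k \<Longrightarrow> KK < card (Xs i)"
    and "\<And>i. k \<le> i \<Longrightarrow> Xs i = {}"
  using assms unfolding Omega_def nf_def KK_def by auto

lemma om_cover: "Xs \<in> Omega Rels ar A k X \<Longrightarrow> x \<in> X \<Longrightarrow> \<exists>i<k. x \<in> Xs i"
  using omD(3) by blast

lemma om_ne:
  assumes "Xs \<in> Omega Rels ar A k X" "finite X" "i < k"
  shows "Xs i \<noteq> {}"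
proof (cases "i < nf")
  case True
  then have "finite (A i)" "A i \<noteq> {}" using fin_iff A_ne assms by auto
  then have "card (A i) > 0" by (simp add: card_gt_0_iff)
  then show ?thesis using omD(4)[OF assms(1) True] by auto
next
  case False
  then have "KK < card (Xs i)" using omD(5)[OF assms(1)] assms(3) by simp
  then show ?thesis by auto
qed

lemma om_fin_iff:
  assumes "Xs \<in> Omega Rels ar A k X" "i < k"
  shows "i < nf \<longleftrightarrow> card (Xs i) \<le> KK"
proof (cases "i < nf")
  case True then show ?thesis using omD(4)[OF assms(1)] card_fin_le_K by simp
next
  case False then have "KK < card (Xs i)" using omD(5)[OF assms(1)] assms(2) by simp
  then show ?thesis using False by simp
qed

lemma om_finite: "Xs \<in> Omega Rels ar A k X \<Longrightarrow> finite X \<Longrightarrow> finite (Xs i)"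
proof -
  assume a: "Xs \<in> Omega Rels ar A k X" "finite X"
  show ?thesis
  proof (cases "i < k")
    case True then show ?thesis using omD(1)[OF a(1) True] a(2) finite_subset by blast
  next
    case False then show ?thesis using omD(6)[OF a(1)] by simp
  qed
qed

lemma ext_inj:
  assumes Bs: "Bs \<in> Omega Rels ar A k X" and fX: "finite X"
    and D: "finite D" "D \<subseteq> univ M"
    and cap: "\<forall>l<k. nf \<le> l \<longrightarrow> card (D \<inter> A l) \<le> KK + 1"
  shows "\<exists>h. inj_on h D \<and> (\<forall>x\<in>D. \<forall>l<k. x \<in> A l \<longrightarrow> h x \<in> Bs l)"
proof -
  have "\<forall>l<k. \<exists>F. F ` (D \<inter> A l) \<subseteq> Bs l \<and> inj_on F (D \<inter> A l)"
  proof (intro allI impI)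
    fix l assume l: "l < k"
    have c: "card (D \<inter> A l) \<le> card (Bs l)"
    proof (cases "l < nf")
      case True
      then have "finite (A l)" using fin_iff l by simp
      then have "card (D \<inter> A l) \<le> card (A l)" by (simp add: card_mono)
      then show ?thesis using omD(4)[OF Bs True] by simp
    next
      case False
      then have "card (D \<inter> A l) \<le> KK + 1" using cap l by simp
      moreover have "KK < card (Bs l)" using omD(5)[OF Bs] False l by simp
      ultimately show ?thesis by simp
    qed
    show "\<exists>F. F ` (D \<inter> A l) \<subseteq> Bs l \<and> inj_on F (D \<inter> A l)"
      by (rule card_le_inj) (use D om_finite[OF Bs fX] c in auto)
  qed
  then obtain F where F: "\<forall>l<k. F l ` (D \<inter> A l) \<subseteq> Bs l \<and> inj_on (F l) (D \<inter> A l)"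
    by metis
  have dP: "\<forall>i<k. \<forall>j<k. i \<noteq> j \<longrightarrow> (D \<inter> A i) \<inter> (D \<inter> A j) = {}"
  proof (intro allI impI)
    fix i j assume "i < k" "j < k" "i \<noteq> j"
    then have "A i \<inter> A j = {}" using A_disj by simp
    then show "(D \<inter> A i) \<inter> (D \<inter> A j) = {}" by blast
  qed
  from glue[OF dP omD(2)[OF Bs]] F obtain G where
    G: "\<forall>l<k. \<forall>x\<in>D \<inter> A l. G x = F l x" "inj_on G (\<Union>l<k. D \<inter> A l)" by blast
  have "(\<Union>l<k. D \<inter> A l) = D" using D A_Union by blast
  then show ?thesis using G F by (intro exI[of _ G]) (auto simp: image_subset_iff)
qed

lemma g_inj:
  assumes Bs: "Bs \<in> Omega Rels ar A k X" and fX: "finite X"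
  shows "\<exists>g. inj_on g X \<and> (\<forall>x\<in>X. \<forall>l<k. x \<in> Bs l \<longrightarrow> g x \<in> A l)"
proof -
  have "\<forall>l<k. \<exists>F. F ` (Bs l) \<subseteq> A l \<and> inj_on F (Bs l)"
  proof (intro allI impI)
    fix l assume l: "l < k"
    have fB: "finite (Bs l)" using om_finite[OF Bs fX] .
    show "\<exists>F. F ` (Bs l) \<subseteq> A l \<and> inj_on F (Bs l)"
    proof (cases "l < nf")
      case True
      then have "finite (A l)" using fin_iff l by simp
      moreover have "card (Bs l) \<le> card (A l)" using omD(4)[OF Bs True] by simp
      ultimately show ?thesis using card_le_inj[OF fB] by blast
    next
      case False
      then have "infinite (A l)" using fin_iff l by simp
      then obtain C where C: "finite C" "card C = card (Bs l)" "C \<subseteq> A l"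
        using infinite_arbitrarily_large by blast
      then obtain F where "F ` (Bs l) \<subseteq> C" "inj_on F (Bs l)" using card_le_inj[OF fB C(1)] by auto
      then show ?thesis using C(3) by blast
    qed
  qed
  then obtain F where F: "\<forall>l<k. F l ` (Bs l) \<subseteq> A l \<and> inj_on (F l) (Bs l)" by metis
  from glue[OF omD(2)[OF Bs] A_disj] F obtain G where
    G: "\<forall>l<k. \<forall>x\<in>Bs l. G x = F l x" "inj_on G (\<Union>l<k. Bs l)" by blast
  then show ?thesis using F omD(3)[OF Bs] by (intro exI[of _ G]) (auto simp: image_subset_iff)
qed

lemma aut_crit:
  assumes bij: "bij_betw f (univ M) (univ M)"
    and inv: "\<And>\<tau> ds. distinct ds \<Longrightarrow> set ds \<subseteq> univ M \<Longrightarrow> length ds \<le> LL \<Longrightarrow>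
                 atom_ok Rels ar Cs (length ds) \<tau> \<Longrightarrow> holds M \<tau> ds = holds M \<tau> (map f ds)"
  shows "aut f"
  unfolding iso_map_def
proof (intro conjI ballI allI impI)
  show "bij_betw f (univ M) (univ M)" by fact
next
  fix c assume c: "c \<in> Cs"
  have cM: "cst M c \<in> univ M" using wfM c by (simp add: wf_struc_def)
  have "holds M (Eq (C c) (V 0)) [cst M c] = holds M (Eq (C c) (V 0)) (map f [cst M c])"
    by (rule inv) (use cM c LL_def in auto)
  then show "f (cst M c) = cst M c" by simp
next
  fix r xs assume r: "r \<in> Rels" and xs: "set xs \<subseteq> univ M"
  have fxs: "set (map f xs) \<subseteq> univ M" using xs bij by (auto simp: bij_betw_def)
  show "rel M r (map f xs) = rel M r xs"
  proof (cases "length xs = ar r")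
    case False
    then show ?thesis using wfM unfolding wf_struc_def by (metis length_map)
  next
    case True
    define ds where "ds = remdups xs"
    obtain idx where idx: "xs = map (nth ds) idx" "\<forall>i\<in>set idx. i < length ds"
      using idx_repr[of xs ds] ds_def by auto
    have len: "length ds \<le> LL"
    proof -
      have "length ds \<le> length xs" unfolding ds_def by (rule length_remdups_leq)
      then show ?thesis using True ar_le[OF r] LL_def by simp
    qed
    have ok: "atom_ok Rels ar Cs (length ds) (R r (map V idx))"
      using r True idx by auto
    have "holds M (R r (map V idx)) ds = holds M (R r (map V idx)) (map f ds)"
      by (rule inv) (use ds_def xs len ok in auto)
    moreover have "map (nth (map f ds)) idx = map f xs"
      using idx by (auto simp: map_eq_conv)
    ultimately show ?thesis using idx(1) by (simp only: holds_idx)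
  qed
qed

lemma const_single:
  assumes c: "c \<in> Cs" and l: "l < k" "cst M c \<in> A l"
  shows "A l = {cst M c}"
proof -
  have "y = cst M c" if y: "y \<in> A l" for y
  proof -
    have "sm (cst M c) y" using A_sim l y by blast
    then have "aut (transp_fun (cst M c) y)" by (simp add: sim_def)
    then have "transp_fun (cst M c) y (cst M c) = cst M c" using c unfolding iso_map_def by blast
    then show ?thesis by simp
  qed
  then show ?thesis using l by blast
qed

end




context cx
begin

definition gB :: "nat \<Rightarrow> (nat \<Rightarrow> nat set) \<Rightarrow> nat \<Rightarrow> nat" where
  "gB n Bs = (SOME g. inj_on g {1..n} \<and> (\<forall>x\<in>{1..n}. \<forall>l<k. x \<in> Bs l \<longrightarrow> g x \<in> A l))"

definition Phi :: "nat \<Rightarrow> (nat \<Rightarrow> nat set) \<Rightarrow> ('r,'c) struc" where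
  "Phi n Bs = Struc {1..n} (\<lambda>r xs. rel M r (map (gB n Bs) xs) \<and> set xs \<subseteq> {1..n})
     (\<lambda>c. if c \<in> Cs then inv_into {1..n} (gB n Bs) (cst M c) else undefined)"

definition cvia :: "('r,'c) struc \<Rightarrow> (nat \<Rightarrow> nat set) \<Rightarrow> bool" where
  "cvia N Bs \<longleftrightarrow> (\<forall>\<tau> bs as. atom_ok Rels ar Cs (length bs) \<tau> \<and> length as = length bs \<and>
        distinct bs \<and> distinct as \<and> set bs \<subseteq> univ N \<and> set as \<subseteq> univ M \<and>
        (\<forall>i<k. \<forall>j<length bs. (bs ! j \<in> Bs i) = (as ! j \<in> A i))
        \<longrightarrow> (holds N \<tau> bs = holds M \<tau> as))"

lemma compatible_iff: "compatible Rels ar Cs M A k N \<longleftrightarrow> (\<exists>Bs\<in>Omega Rels ar A k (univ N). cvia N Bs)"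
  unfolding compatible_def cvia_def by simp

lemma cviaD:
  assumes "cvia N Bs" "atom_ok Rels ar Cs (length bs) \<tau>" "length as = length bs"
        "distinct bs" "distinct as" "set bs \<subseteq> univ N" "set as \<subseteq> univ M"
        "\<And>i j. i < k \<Longrightarrow> j < length bs \<Longrightarrow> (bs ! j \<in> Bs i) = (as ! j \<in> A i)"
  shows "holds N \<tau> bs = holds M \<tau> as"
  using assms unfolding cvia_def by blast

abbreviation "Om n \<equiv> Omega Rels ar A k {1..n}"

lemma gB_prop:
  assumes "Bs \<in> Om n"
  shows "inj_on (gB n Bs) {1..n}" "\<And>x l. x \<in> {1..n} \<Longrightarrow> l < k \<Longrightarrow> x \<in> Bs l \<Longrightarrow> gB n Bs x \<in> A l"
proof -
  have "\<exists>g. inj_on g {1..n} \<and> (\<forall>x\<in>{1..n}. \<forall>l<k. x \<in> Bs l \<longrightarrow> g x \<in> A l)"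
    using g_inj[OF assms] by simp
  then have "inj_on (gB n Bs) {1..n} \<and> (\<forall>x\<in>{1..n}. \<forall>l<k. x \<in> Bs l \<longrightarrow> gB n Bs x \<in> A l)"
    unfolding gB_def by (rule someI_ex)
  then show "inj_on (gB n Bs) {1..n}" "\<And>x l. x \<in> {1..n} \<Longrightarrow> l < k \<Longrightarrow> x \<in> Bs l \<Longrightarrow> gB n Bs x \<in> A l"
    by auto
qed

lemma gB_pat:
  assumes "Bs \<in> Om n" "x \<in> {1..n}" "l < k"
  shows "gB n Bs x \<in> A l \<longleftrightarrow> x \<in> Bs l"
  by (rule pat_iff[OF A_disj _ _ omD(2)[OF assms(1)] assms(3)])
     (use om_cover[OF assms(1,2)] gB_prop(2)[OF assms(1) assms(2)] in auto)

lemma gB_in: "Bs \<in> Om n \<Longrightarrow> x \<in> {1..n} \<Longrightarrow> gB n Bs x \<in> univ M"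
  using om_cover gB_prop(2) A_sub by blast

lemma cst_img:
  assumes Bs: "Bs \<in> Om n" and c: "c \<in> Cs"
  shows "cst M c \<in> gB n Bs ` {1..n}"
proof -
  have "cst M c \<in> univ M" using wfM c by (simp add: wf_struc_def)
  then obtain l where l: "l < k" "cst M c \<in> A l" using A_cover by blast
  then have Al: "A l = {cst M c}" using const_single c by blast
  then have "finite (A l)" by simp
  then have "l < nf" using fin_iff l(1) by blast
  then have "card (Bs l) = 1" using omD(4)[OF Bs] Al by simp
  then obtain b where b: "Bs l = {b}" using card_1_singletonE by blast
  then have "b \<in> {1..n}" using omD(1)[OF Bs l(1)] by auto
  moreover have "gB n Bs b \<in> A l" using gB_prop(2)[OF Bs \<open>b \<in> {1..n}\<close> l(1)] b by simp
  ultimately show ?thesis using Al by (metis image_eqI singletonD)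
qed

lemma Phi_simps:
  "univ (Phi n Bs) = {1..n}"
  "rel (Phi n Bs) r xs = (rel M r (map (gB n Bs) xs) \<and> set xs \<subseteq> {1..n})"
  "cst (Phi n Bs) c = (if c \<in> Cs then inv_into {1..n} (gB n Bs) (cst M c) else undefined)"
  by (simp_all add: Phi_def)

lemma Phi_wf:
  assumes Bs: "Bs \<in> Om n"
  shows "wf_struc Rels ar Cs (Phi n Bs)"
  unfolding wf_struc_def Phi_simps
proof (intro conjI allI impI ballI)
  fix r xs assume h: "rel M r (map (gB n Bs) xs) \<and> set xs \<subseteq> {1..n}"
  then show "r \<in> Rels" "length xs = ar r" "set xs \<subseteq> {1..n}"
    using wfM unfolding wf_struc_def by (metis length_map)+
next
  fix c assume c: "c \<in> Cs"
  show "(if c \<in> Cs then inv_into {1..n} (gB n Bs) (cst M c) else undefined) \<in> {1..n}"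
    using c inv_into_into[OF cst_img[OF Bs c]] by simp
next
  fix c assume "c \<notin> Cs"
  then show "(if c \<in> Cs then inv_into {1..n} (gB n Bs) (cst M c) else undefined) = undefined" by simp
qed

lemma Phi_tval:
  assumes Bs: "Bs \<in> Om n" and t: "trm_ok Cs (length bs) t" and bs: "set bs \<subseteq> {1..n}"
  shows "gB n Bs (tval (Phi n Bs) bs t) = tval M (map (gB n Bs) bs) t \<and> tval (Phi n Bs) bs t \<in> {1..n}"
proof (cases t)
  case (V i)
  then have "i < length bs" using t by simp
  then have "bs ! i \<in> {1..n}" using bs nth_mem by blast
  moreover have "map (gB n Bs) bs ! i = gB n Bs (bs ! i)" using \<open>i < length bs\<close> by simp
  ultimately have "bs ! i \<in> {1..n}" "map (gB n Bs) bs ! i = gB n Bs (bs ! i)" by auto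
  then show ?thesis using V by simp
next
  case (C c)
  then have c: "c \<in> Cs" using t by simp
  have i1: "inv_into {1..n} (gB n Bs) (cst M c) \<in> {1..n}" using inv_into_into[OF cst_img[OF Bs c]] .
  have i2: "gB n Bs (inv_into {1..n} (gB n Bs) (cst M c)) = cst M c" using f_inv_into_f[OF cst_img[OF Bs c]] .
  have "tval (Phi n Bs) bs t = inv_into {1..n} (gB n Bs) (cst M c)" using C c by (simp add: Phi_simps)
  then show ?thesis using i1 i2 C by simp
qed

lemma Phi_holds:
  assumes Bs: "Bs \<in> Om n" and ok: "atom_ok Rels ar Cs (length bs) \<tau>" and bs: "set bs \<subseteq> {1..n}"
  shows "holds (Phi n Bs) \<tau> bs = holds M \<tau> (map (gB n Bs) bs)"
proof (cases \<tau>)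
  case (R r ts)
  have m1: "map (gB n Bs) (map (tval (Phi n Bs) bs) ts) = map (tval M (map (gB n Bs) bs)) ts"
    using Phi_tval[OF Bs _ bs] ok R by auto
  have m2: "(set (map (tval (Phi n Bs) bs) ts) \<subseteq> {1..n}) = True"
    using Phi_tval[OF Bs _ bs] ok R by auto
  show ?thesis by (simp only: R holds.simps Phi_simps m1 m2 simp_thms)
next
  case (Eq t u)
  have e: "gB n Bs (tval (Phi n Bs) bs t) = tval M (map (gB n Bs) bs) t" "tval (Phi n Bs) bs t \<in> {1..n}"
       "gB n Bs (tval (Phi n Bs) bs u) = tval M (map (gB n Bs) bs) u" "tval (Phi n Bs) bs u \<in> {1..n}"
    using Phi_tval[OF Bs _ bs] ok Eq by auto
  have "(tval (Phi n Bs) bs t = tval (Phi n Bs) bs u) \<longleftrightarrow>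
        (gB n Bs (tval (Phi n Bs) bs t) = gB n Bs (tval (Phi n Bs) bs u))"
    using inj_on_eq_iff[OF gB_prop(1)[OF Bs] e(2) e(4)] by simp
  then show ?thesis using Eq e(1,3) by simp
qed

lemma Phi_cvia:
  assumes Bs: "Bs \<in> Om n"
  shows "cvia (Phi n Bs) Bs"
  unfolding cvia_def
proof (intro allI impI, elim conjE)
  fix \<tau> bs as
  assume ok: "atom_ok Rels ar Cs (length bs) \<tau>" and len: "length as = length bs"
    and dbs: "distinct bs" and das: "distinct as" and bsN: "set bs \<subseteq> univ (Phi n Bs)"
    and asM: "set as \<subseteq> univ M" and pat: "\<forall>i<k. \<forall>j<length bs. (bs ! j \<in> Bs i) = (as ! j \<in> A i)"
  have bsn: "set bs \<subseteq> {1..n}" using bsN by (simp add: Phi_simps)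
  have "holds (Phi n Bs) \<tau> bs = holds M \<tau> (map (gB n Bs) bs)" using Phi_holds[OF Bs ok bsn] .
  also have "\<dots> = holds M \<tau> as"
  proof (rule homog)
    show "distinct (map (gB n Bs) bs)" using dbs gB_prop(1)[OF Bs] bsn
      by (simp add: distinct_map inj_on_subset)
    show "set (map (gB n Bs) bs) \<subseteq> univ M" using gB_in[OF Bs] bsn by auto
    show "\<forall>j<length (map (gB n Bs) bs). \<forall>i<k. map (gB n Bs) bs ! j \<in> A i \<longleftrightarrow> as ! j \<in> A i"
    proof (intro allI impI)
      fix j i assume j: "j < length (map (gB n Bs) bs)" and i: "i < k"
      then have j': "j < length bs" by simp
      then have bj: "bs ! j \<in> {1..n}" using bsn nth_mem by blast
      have "map (gB n Bs) bs ! j = gB n Bs (bs ! j)" using j' by simp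
      then show "map (gB n Bs) bs ! j \<in> A i \<longleftrightarrow> as ! j \<in> A i"
        using gB_pat[OF Bs bj i] pat i j' by simp
    qed
  qed (use len das asM ok in auto)
  finally show "holds (Phi n Bs) \<tau> bs = holds M \<tau> as" .
qed

lemma Phi_in_H:
  assumes Bs: "Bs \<in> Om n" and H: "hereditary Rels ar Cs H" and MH: "M \<in> H"
  shows "Phi n Bs \<in> H"
proof -
  let ?g = "gB n Bs"
  define S where "S = Struc (?g ` {1..n}) (\<lambda>r xs. rel M r xs \<and> set xs \<subseteq> ?g ` {1..n}) (cst M)"
  have sub: "?g ` {1..n} \<subseteq> univ M" using gB_in[OF Bs] by auto
  have wfS: "wf_struc Rels ar Cs S"
    unfolding wf_struc_def S_def using wfM cst_img[OF Bs] unfolding wf_struc_def by auto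
  have "substructure Rels Cs S M"
    unfolding substructure_def S_def using sub by auto
  then have SH: "S \<in> H" using H MH wfS unfolding hereditary_def by blast
  let ?f = "inv_into {1..n} ?g"
  have bijg: "bij_betw ?g {1..n} (?g ` {1..n})" using gB_prop(1)[OF Bs] by (simp add: inj_on_imp_bij_betw)
  have "iso_map Rels Cs S (Phi n Bs) ?f"
    unfolding iso_map_def
  proof (intro conjI ballI allI impI)
    show "bij_betw ?f (univ S) (univ (Phi n Bs))"
      using bij_betw_inv_into[OF bijg] by (simp add: S_def Phi_simps)
  next
    fix r xs assume "r \<in> Rels" "set xs \<subseteq> univ S"
    then have xs: "set xs \<subseteq> ?g ` {1..n}" by (simp add: S_def)
    have "map (?g \<circ> ?f) xs = xs"
    proof (rule map_idI)
      fix x assume "x \<in> set xs"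
      then have xx: "x \<in> ?g ` {1..n}" using xs by blast
      show "(?g \<circ> ?f) x = x" using f_inv_into_f[OF xx] by simp
    qed
    have "map ?g (map ?f xs) = map (?g \<circ> ?f) xs" by (rule map_map)
    also have "\<dots> = xs" by fact
    finally have "map ?g (map ?f xs) = xs" .
    moreover have "?f ` set xs \<subseteq> {1..n}"
    proof (rule image_subsetI)
      fix x assume "x \<in> set xs"
      then have xx: "x \<in> ?g ` {1..n}" using xs by blast
      show "?f x \<in> {1..n}" by (rule inv_into_into[OF xx])
    qed
    then have "(set (map ?f xs) \<subseteq> {1..n}) = True" by simp
    moreover have "(set xs \<subseteq> ?g ` {1..n}) = True" using xs by simp
    moreover have "rel S r xs = (rel M r xs \<and> set xs \<subseteq> ?g ` {1..n})" by (simp add: S_def)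
    ultimately show "rel (Phi n Bs) r (map ?f xs) = rel S r xs"
      by (simp only: Phi_simps simp_thms)
  next
    fix c assume "c \<in> Cs"
    then show "?f (cst S c) = cst (Phi n Bs) c" by (simp add: S_def Phi_simps)
  qed
  then have "isomorphic Rels Cs S (Phi n Bs)" unfolding isomorphic_def by blast
  then show ?thesis using H SH Phi_wf[OF Bs] unfolding hereditary_def by blast
qed

lemma cvia_unique:
  assumes Bs: "Bs \<in> Om n" and wfN: "wf_struc Rels ar Cs N" and uN: "univ N = {1..n}" and cv: "cvia N Bs"
  shows "N = Phi n Bs"
proof -
  let ?g = "gB n Bs"
  have pat: "\<And>i j ds. i < k \<Longrightarrow> j < length ds \<Longrightarrow> set ds \<subseteq> {1..n} \<Longrightarrow> (ds ! j \<in> Bs i) = (map ?g ds ! j \<in> A i)"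
    using gB_pat[OF Bs] by (metis nth_map nth_mem subsetD)
  have dmap: "distinct ds \<Longrightarrow> set ds \<subseteq> {1..n} \<Longrightarrow> distinct (map ?g ds)" for ds
    using gB_prop(1)[OF Bs] by (simp add: distinct_map inj_on_subset)
  have smap: "set ds \<subseteq> {1..n} \<Longrightarrow> set (map ?g ds) \<subseteq> univ M" for ds using gB_in[OF Bs] by auto
  have wfP: "wf_struc Rels ar Cs (Phi n Bs)" using Phi_wf[OF Bs] .
  have relEq: "rel N r xs = rel (Phi n Bs) r xs" for r xs
  proof (cases "r \<in> Rels \<and> length xs = ar r \<and> set xs \<subseteq> {1..n}")
    case False
    have "\<not> rel N r xs"
    proof
      assume "rel N r xs"
      then have "r \<in> Rels \<and> length xs = ar r \<and> set xs \<subseteq> univ N" using wfN unfolding wf_struc_def by blast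
      then show False using False by (simp only: uN)
    qed
    moreover have "\<not> rel (Phi n Bs) r xs"
    proof
      assume "rel (Phi n Bs) r xs"
      then have "r \<in> Rels \<and> length xs = ar r \<and> set xs \<subseteq> univ (Phi n Bs)" using wfP unfolding wf_struc_def by blast
      then show False using False by (simp only: Phi_simps)
    qed
    ultimately show ?thesis by simp
  next
    case True
    define ds where "ds = remdups xs"
    obtain idx where idx: "xs = map (nth ds) idx" "\<forall>i\<in>set idx. i < length ds"
      using idx_repr[of xs ds] ds_def by auto
    have dsn: "set ds \<subseteq> {1..n}" using True ds_def by simp
    have ok: "atom_ok Rels ar Cs (length ds) (R r (map V idx))" using True idx by auto
    have "holds N (R r (map V idx)) ds = holds M (R r (map V idx)) (map ?g ds)"
      by (rule cviaD[OF cv ok]) (use dsn uN ds_def dmap smap pat in auto)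
    moreover have "map (nth (map ?g ds)) idx = map ?g xs" using idx by (auto simp: map_eq_conv)
    ultimately have "rel N r xs = rel M r (map ?g xs)" using idx(1) by (simp only: holds_idx)
    then show ?thesis using True by (simp add: Phi_simps)
  qed
  have cstEq: "cst N c = cst (Phi n Bs) c" for c
  proof (cases "c \<in> Cs")
    case False
    then show ?thesis using wfN wfP unfolding wf_struc_def by simp
  next
    case True
    define b where "b = cst N c"
    have bn: "b \<in> {1..n}" using wfN True uN unfolding wf_struc_def b_def by auto
    have "holds N (Eq (C c) (V 0)) [b] = holds M (Eq (C c) (V 0)) [?g b]"
      by (rule cviaD[OF cv]) (use True bn uN gB_in[OF Bs] gB_pat[OF Bs] in auto)
    then have "cst M c = ?g b" by (simp add: b_def)
    then show ?thesis using True bn gB_prop(1)[OF Bs] by (simp add: Phi_simps b_def inv_into_f_f)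
  qed
  show ?thesis
    by (rule struc.expand) (use uN relEq cstEq in \<open>auto simp: Phi_simps fun_eq_iff\<close>)
qed

end




lemma card_fibers:
  assumes "finite S" "\<And>y. y \<in> f ` S \<Longrightarrow> card {x\<in>S. f x = y} = m"
  shows "card S = card (f ` S) * m"
proof -
  have e: "S = (\<Union>y\<in>f ` S. {x\<in>S. f x = y})" by auto
  have d: "\<forall>i\<in>f ` S. \<forall>j\<in>f ` S. i \<noteq> j \<longrightarrow> {x\<in>S. f x = i} \<inter> {x\<in>S. f x = j} = {}" by blast
  have "card (\<Union>y\<in>f ` S. {x\<in>S. f x = y}) = (\<Sum>y\<in>f ` S. card {x\<in>S. f x = y})"
    by (rule card_UN_disjoint) (use assms(1) d in auto)
  then have "card S = (\<Sum>y\<in>f ` S. card {x\<in>S. f x = y})" using e by simp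
  also have "\<dots> = (\<Sum>y\<in>f ` S. m)" using assms(2) by simp
  finally show ?thesis by simp
qed

lemma card_ins_del: "finite S \<Longrightarrow> x \<in> S \<or> y \<in> S \<Longrightarrow> card (insert y S - {x}) \<le> card S"
proof -
  assume f: "finite S" and h: "x \<in> S \<or> y \<in> S"
  show ?thesis
  proof (cases "x \<in> S")
    case True
    have "card (insert y S - {x}) \<le> card (insert y (S - {x}))" by (rule card_mono) (use f in auto)
    also have "\<dots> \<le> Suc (card (S - {x}))" by (simp add: card_insert_le_m1 f)
    also have "\<dots> = card S" by (rule card_Suc_Diff1[OF f True])
    finally show ?thesis .
  next
    case False
    then have "insert y S - {x} = S" using h by auto
    then show ?thesis by simp
  qed
qed

context cx
begin

lemma N_inv:
  assumes Q: "Q \<in> Om n" and uN: "univ N = {1..n}" and cv: "cvia N Q"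
    and i: "i < k" "b \<in> Q i" "b' \<in> Q i"
    and bs: "distinct bs" "set bs \<subseteq> {1..n}" and ok: "atom_ok Rels ar Cs (length bs) \<tau>"
  shows "holds N \<tau> bs = holds N \<tau> (map (transp_fun b b') bs)"
proof -
  let ?g = "gB n Q"
  let ?t = "transp_fun b b'"
  have bb: "b \<in> {1..n}" "b' \<in> {1..n}" using omD(1)[OF Q i(1)] i by auto
  have dmap: "distinct (map ?g bs)" using bs gB_prop(1)[OF Q] by (simp add: distinct_map inj_on_subset)
  have smap: "set (map ?g bs) \<subseteq> univ M" using gB_in[OF Q] bs by auto
  have "holds N \<tau> bs = holds M \<tau> (map ?g bs)"
    by (rule cviaD[OF cv ok]) (use bs uN dmap smap gB_pat[OF Q] in \<open>auto simp: subset_iff\<close>)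
  moreover have "holds N \<tau> (map ?t bs) = holds M \<tau> (map ?g bs)"
  proof (rule cviaD[OF cv])
    show "atom_ok Rels ar Cs (length (map ?t bs)) \<tau>" using ok by simp
    show "distinct (map ?t bs)" using bs(1) transp_inj_on by (simp add: distinct_map)
    show "set (map ?t bs) \<subseteq> univ N" using bs bb uN by (auto simp: transp_fun_def)
    fix l j assume l: "l < k" and j: "j < length (map ?t bs)"
    have "bs ! j \<in> {1..n}" using j bs(2) nth_mem by (metis length_map subsetD)
    then show "(map ?t bs ! j \<in> Q l) = (map ?g bs ! j \<in> A l)"
      using transp_mem[OF i(2,3) omD(2)[OF Q] i(1) l] gB_pat[OF Q _ l] j by simp
  qed (use dmap smap in auto)
  ultimately show ?thesis by simp
qed

lemma stepA:
  assumes P: "P \<in> Om n" and Q: "Q \<in> Om n" and wfN: "wf_struc Rels ar Cs N" and uN: "univ N = {1..n}"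
    and cP: "cvia N P" and cQ: "cvia N Q"
    and ijj: "i < k" "j < k" "j' < k"
    and b: "b \<in> Q i" "b \<in> P j" and b': "b' \<in> Q i" "b' \<in> P j'"
  shows "j = j'"
proof (rule ccontr)
  assume jj: "j \<noteq> j'"
  obtain a where a: "a \<in> A j" using A_ne ijj by blast
  obtain a' where a': "a' \<in> A j'" using A_ne ijj by blast
  have aa: "a \<noteq> a'" using disjD[OF A_disj ijj(2,3), of a] a a' jj by blast
  have aM: "a \<in> univ M" "a' \<in> univ M" using a a' A_sub ijj by auto
  have bnb: "b \<noteq> b'" using disjD[OF omD(2)[OF P] ijj(2,3), of b] b b' jj by blast
  let ?t = "transp_fun a a'"
  have "aut ?t"
  proof (rule aut_crit)
    show "bij_betw ?t (univ M) (univ M)" using transp_bij aM by blast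
    fix \<tau> ds assume ds: "distinct ds" "set ds \<subseteq> univ M" "length ds \<le> LL"
      and ok: "atom_ok Rels ar Cs (length ds) \<tau>"
    show "holds M \<tau> ds = holds M \<tau> (map ?t ds)"
    proof (cases "a \<in> set ds \<or> a' \<in> set ds")
      case False
      then have "map ?t ds = ds" by (intro map_idI) (auto simp: transp_fun_def)
      then show ?thesis by simp
    next
      case True
      define D where "D = insert a (insert a' (set ds))"
      have fD: "finite D" "D \<subseteq> univ M" using ds aM by (auto simp: D_def)
      have cardds: "card (set ds) \<le> KK + 1" using ds LL_le distinct_card by fastforce
      have cap: "\<forall>l<k. nf \<le> l \<longrightarrow> card (D \<inter> A l) \<le> KK + 1"
      proof (intro allI impI)
        fix l assume l: "l < k" "nf \<le> l"
        show "card (D \<inter> A l) \<le> KK + 1"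
        proof (cases "l = j")
          case False
          then have "a \<notin> A l" using disjD[OF A_disj ijj(2) l(1), of a] a by blast
          then have "D \<inter> A l \<subseteq> insert a' (set ds) - {a}" by (auto simp: D_def)
          then have "card (D \<inter> A l) \<le> card (insert a' (set ds) - {a})" by (intro card_mono) auto
          moreover have "card (insert a' (set ds) - {a}) \<le> card (set ds)"
            by (rule card_ins_del) (use True in auto)
          ultimately have "card (D \<inter> A l) \<le> card (set ds)" by (rule le_trans)
          then show ?thesis using cardds by simp
        next
          case True
          then have l': "l \<noteq> j'" using jj by simp
          then have "a' \<notin> A l" using disjD[OF A_disj ijj(3) l(1), of a'] a' by blast
          then have "D \<inter> A l \<subseteq> insert a (set ds) - {a'}" by (auto simp: D_def)
          then have "card (D \<inter> A l) \<le> card (insert a (set ds) - {a'})" by (intro card_mono) auto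
          moreover have "card (insert a (set ds) - {a'}) \<le> card (set ds)"
            by (rule card_ins_del) (use \<open>a \<in> set ds \<or> a' \<in> set ds\<close> in auto)
          ultimately have "card (D \<inter> A l) \<le> card (set ds)" by (rule le_trans)
          then show ?thesis using cardds by simp
        qed
      qed
      obtain h0 where h0: "inj_on h0 D" "\<forall>x\<in>D. \<forall>l<k. x \<in> A l \<longrightarrow> h0 x \<in> P l"
        using ext_inj[OF P _ fD cap] by auto
      define h1 where "h1 = transp_fun (h0 a) b \<circ> h0"
      define h where "h = transp_fun (h1 a') b' \<circ> h1"
      have aD: "a \<in> D" "a' \<in> D" by (auto simp: D_def)
      have h0a: "h0 a \<in> P j" "h0 a' \<in> P j'" using h0(2) aD a a' ijj by auto
      have h1P: "\<forall>x\<in>D. \<forall>l<k. x \<in> A l \<longrightarrow> h1 x \<in> P l"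
        using h0(2) transp_mem[OF h0a(1) b(2) omD(2)[OF P] ijj(2)] by (simp add: h1_def)
      have h1inj: "inj_on h1 D" unfolding h1_def by (rule comp_inj_on[OF h0(1) transp_inj_on])
      have h1a: "h1 a = b" by (simp add: h1_def)
      have h1a': "h1 a' \<in> P j'" using h1P aD a' ijj by auto
      have hP: "\<forall>x\<in>D. \<forall>l<k. x \<in> A l \<longrightarrow> h x \<in> P l"
        using h1P transp_mem[OF h1a' b'(2) omD(2)[OF P] ijj(3)] by (simp add: h_def)
      have hinj: "inj_on h D" unfolding h_def by (rule comp_inj_on[OF h1inj transp_inj_on])
      have h1ne: "h1 a' \<noteq> b" using h1inj aD aa h1a by (metis inj_on_def)
      have ha: "h a = b" using h1a h1ne bnb by (simp add: h_def transp_fun_def)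
      have ha': "h a' = b'" by (simp add: h_def)
      have hpat: "\<And>x l. x \<in> D \<Longrightarrow> l < k \<Longrightarrow> h x \<in> P l \<longleftrightarrow> x \<in> A l"
      proof -
        fix x l assume x: "x \<in> D" and l: "l < k"
        show "h x \<in> P l \<longleftrightarrow> x \<in> A l"
          by (rule pat_iff[OF omD(2)[OF P] _ _ A_disj l]) (use x fD A_cover hP in auto)
      qed
      have hn: "\<And>x. x \<in> D \<Longrightarrow> h x \<in> {1..n}"
      proof -
        fix x assume "x \<in> D"
        then obtain l where "l < k" "x \<in> A l" using A_cover fD by blast
        then show "h x \<in> {1..n}" using hP \<open>x \<in> D\<close> omD(1)[OF P] by blast
      qed
      have dsD: "set ds \<subseteq> D" by (auto simp: D_def)
      let ?bs = "map h ds"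
      have dbs: "distinct ?bs" using ds(1) hinj dsD by (simp add: distinct_map inj_on_subset)
      have sbs: "set ?bs \<subseteq> {1..n}" using hn dsD by auto
      have s1: "holds N \<tau> ?bs = holds M \<tau> ds"
        by (rule cviaD[OF cP]) (use ok dbs ds sbs uN hpat dsD in \<open>auto simp: subset_iff\<close>)
      have s2: "holds N \<tau> ?bs = holds N \<tau> (map (transp_fun b b') ?bs)"
        by (rule N_inv[OF Q uN cQ ijj(1) b(1) b'(1) dbs sbs]) (use ok in simp)
      have s3: "map (transp_fun b b') ?bs = map h (map ?t ds)"
      proof -
        have "transp_fun b b' (h x) = h (?t x)" if x: "x \<in> set ds" for x
        proof (cases "x = a \<or> x = a'")
          case True then show ?thesis using ha ha' by auto
        next
          case False
          then have "h x \<noteq> b" "h x \<noteq> b'" using hinj aD x dsD ha ha' by (metis inj_on_def subsetD)+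
          then show ?thesis using False by simp
        qed
        then show ?thesis by simp
      qed
      have tD: "\<And>x. x \<in> set ds \<Longrightarrow> ?t x \<in> D" by (auto simp: D_def transp_fun_def)
      have dt: "distinct (map ?t ds)" using ds(1) transp_inj_on by (simp add: distinct_map)
      have s4: "holds N \<tau> (map h (map ?t ds)) = holds M \<tau> (map ?t ds)"
      proof (rule cviaD[OF cP])
        have sub: "set (map ?t ds) \<subseteq> D" using tD by auto
        have ih: "inj_on h (set (map ?t ds))" using inj_on_subset[OF hinj sub] .
        show "distinct (map h (map ?t ds))" by (rule distinct_map[THEN iffD2]) (use dt ih in blast)
        show "set (map h (map ?t ds)) \<subseteq> univ N" using hn tD uN by auto
        show "set (map ?t ds) \<subseteq> univ M" using tD fD by auto
        fix l jx assume "l < k" "jx < length (map h (map ?t ds))"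
        then show "(map h (map ?t ds) ! jx \<in> P l) = (map ?t ds ! jx \<in> A l)"
          using hpat tD by simp
      qed (use ok dt in auto)
      have "holds M \<tau> ds = holds N \<tau> ?bs" using s1 by (rule sym)
      also have "\<dots> = holds N \<tau> (map (transp_fun b b') ?bs)" by (rule s2)
      also have "\<dots> = holds N \<tau> (map h (map ?t ds))" by (simp only: s3)
      also have "\<dots> = holds M \<tau> (map ?t ds)" by (rule s4)
      finally show ?thesis .
    qed
  qed
  then have "sm a a'" using aM by (simp add: sim_def)
  then have "a' \<in> A j" using A_closed a ijj by blast
  then show False using disjD[OF A_disj ijj(2,3), of a'] a' jj by blast
qed

end




context cx
begin

lemma block_eq:
  assumes P: "P \<in> Om n" and Q: "Q \<in> Om n" and wfN: "wf_struc Rels ar Cs N" and uN: "univ N = {1..n}"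
    and cP: "cvia N P" and cQ: "cvia N Q" and ij: "i < k" "j < k" and b: "b \<in> Q i" "b \<in> P j"
  shows "Q i = P j"
proof
  show "Q i \<subseteq> P j"
  proof
    fix b' assume b': "b' \<in> Q i"
    then have "b' \<in> {1..n}" using omD(1)[OF Q ij(1)] by blast
    then obtain j' where j': "j' < k" "b' \<in> P j'" using om_cover[OF P] by blast
    have "j = j'" by (rule stepA[OF P Q wfN uN cP cQ ij(1) ij(2) j'(1) b b' j'(2)])
    then show "b' \<in> P j" using j' by simp
  qed
next
  show "P j \<subseteq> Q i"
  proof
    fix b' assume b': "b' \<in> P j"
    then have "b' \<in> {1..n}" using omD(1)[OF P ij(2)] by blast
    then obtain i' where i': "i' < k" "b' \<in> Q i'" using om_cover[OF Q] by blast
    have "i = i'" by (rule stepA[OF Q P wfN uN cQ cP ij(2) ij(1) i'(1) b(2) b(1) b' i'(2)])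
    then show "b' \<in> Q i" using i' by simp
  qed
qed

lemma sigma_ex:
  assumes P: "P \<in> Om n" and Q: "Q \<in> Om n" and wfN: "wf_struc Rels ar Cs N" and uN: "univ N = {1..n}"
    and cP: "cvia N P" and cQ: "cvia N Q"
  shows "\<exists>\<sigma>. \<sigma> permutes {..<k} \<and> (\<forall>i. Q i = P (\<sigma> i))"
proof -
  have ex: "\<exists>j. j < k \<and> Q i = P j" if i: "i < k" for i
  proof -
    have "Q i \<noteq> {}" using om_ne[OF Q _ i] by simp
    then obtain b where b: "b \<in> Q i" by blast
    then have "b \<in> {1..n}" using omD(1)[OF Q i] by blast
    then obtain j where j: "j < k" "b \<in> P j" using om_cover[OF P] by blast
    then have "Q i = P j" using block_eq[OF P Q wfN uN cP cQ i j(1) b j(2)] by simp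
    then show ?thesis using j by blast
  qed
  define \<sigma> where "\<sigma> i = (if i < k then (SOME j. j < k \<and> Q i = P j) else i)" for i
  have s1: "\<sigma> i < k \<and> Q i = P (\<sigma> i)" if i: "i < k" for i
    unfolding \<sigma>_def using someI_ex[OF ex[OF i]] i by simp
  have inj: "inj_on \<sigma> {..<k}"
  proof (rule inj_onI)
    fix i i' assume i: "i \<in> {..<k}" and i': "i' \<in> {..<k}" and e: "\<sigma> i = \<sigma> i'"
    then have ik: "i < k" "i' < k" by auto
    then have "Q i = Q i'" using s1 e by metis
    moreover have "Q i \<noteq> {}" using om_ne[OF Q _ ik(1)] by simp
    then obtain x where x: "x \<in> Q i" by blast
    ultimately have "x \<in> Q i'" by simp
    then show "i = i'" using disjD[OF omD(2)[OF Q] ik(1) ik(2) x] by simp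
  qed
  have img: "\<sigma> ` {..<k} \<subseteq> {..<k}" using s1 by auto
  have "\<sigma> ` {..<k} = {..<k}" using endo_inj_surj[OF finite_lessThan img inj] .
  then have "bij_betw \<sigma> {..<k} {..<k}" using inj by (simp add: bij_betw_def)
  moreover have "\<And>x. x \<notin> {..<k} \<Longrightarrow> \<sigma> x = x" by (simp add: \<sigma>_def)
  ultimately have perm: "\<sigma> permutes {..<k}" by (rule bij_imp_permutes)
  have "\<forall>i. Q i = P (\<sigma> i)"
  proof
    fix i show "Q i = P (\<sigma> i)"
    proof (cases "i < k")
      case True then show ?thesis using s1 by blast
    next
      case False
      then have "Q i = {}" "P i = {}" "\<sigma> i = i" using omD(6)[OF Q] omD(6)[OF P] by (auto simp: \<sigma>_def)
      then show ?thesis by simp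
    qed
  qed
  then show ?thesis using perm by blast
qed

lemma stepB:
  assumes P: "P \<in> Om n" and Q: "Q \<in> Om n" and wfN: "wf_struc Rels ar Cs N" and uN: "univ N = {1..n}"
    and cP: "cvia N P" and cQ: "cvia N Q" and perm: "\<sigma> permutes {..<k}" and QP: "\<forall>i. Q i = P (\<sigma> i)"
  shows "\<sigma> \<in> AutStar Rels Cs M A k"
proof -
  have sk: "\<sigma> i < k" if "i < k" for i using permutes_in_image[OF perm, of i] that by simp
  have sinj: "\<sigma> i = \<sigma> j \<Longrightarrow> i = j" for i j using permutes_inj[OF perm] by (simp add: inj_def)
  have finsig: "i < nf \<longleftrightarrow> \<sigma> i < nf" if i: "i < k" for i
  proof -
    have "i < nf \<longleftrightarrow> card (Q i) \<le> KK" by (rule om_fin_iff[OF Q i])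
    also have "\<dots> \<longleftrightarrow> card (P (\<sigma> i)) \<le> KK" using QP by simp
    also have "\<dots> \<longleftrightarrow> \<sigma> i < nf" using om_fin_iff[OF P sk[OF i]] by simp
    finally show ?thesis .
  qed
  have "\<exists>F. bij_betw F (A i) (A (\<sigma> i))" if i: "i < k" for i
  proof (cases "i < nf")
    case True
    then have fi: "finite (A i)" using fin_iff[OF i] by simp
    have fs: "finite (A (\<sigma> i))" using fin_iff[OF sk[OF i]] finsig[OF i] True by simp
    have "card (A i) = card (Q i)" using omD(4)[OF Q True] by simp
    also have "\<dots> = card (P (\<sigma> i))" using QP by simp
    also have "\<dots> = card (A (\<sigma> i))" using omD(4)[OF P] finsig[OF i] True by simp
    finally show ?thesis using finite_same_card_bij[OF fi fs] by blast
  next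
    case False
    then have fi: "infinite (A i)" using fin_iff[OF i] by simp
    have fs: "infinite (A (\<sigma> i))" using fin_iff[OF sk[OF i]] finsig[OF i] False by simp
    have e1: "bij_betw (enumerate (A i)) UNIV (A i)" by (rule bij_enumerate[OF fi])
    have e2: "bij_betw (enumerate (A (\<sigma> i))) UNIV (A (\<sigma> i))" by (rule bij_enumerate[OF fs])
    show ?thesis using bij_betw_trans[OF bij_betw_inv_into[OF e1] e2] by blast
  qed
  then obtain F where F: "\<forall>i<k. bij_betw (F i) (A i) (A (\<sigma> i))" by metis
  have dQ: "\<forall>i<k. \<forall>j<k. i \<noteq> j \<longrightarrow> A (\<sigma> i) \<inter> A (\<sigma> j) = {}"
  proof (intro allI impI)
    fix i j assume "i < k" "j < k" "i \<noteq> j"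
    then have "\<sigma> i \<noteq> \<sigma> j" "\<sigma> i < k" "\<sigma> j < k" using sinj sk by auto
    then show "A (\<sigma> i) \<inter> A (\<sigma> j) = {}" using A_disj by simp
  qed
  from glue_bij[OF A_disj dQ F] obtain G where
    G: "\<forall>l<k. \<forall>x\<in>A l. G x = F l x" "bij_betw G (\<Union>l<k. A l) (\<Union>l<k. A (\<sigma> l))" by blast
  have un: "(\<Union>l<k. A (\<sigma> l)) = univ M"
  proof -
    have "(\<Union>l<k. A (\<sigma> l)) = (\<Union>j\<in>\<sigma> ` {..<k}. A j)" by (simp add: image_image)
    also have "\<dots> = (\<Union>j<k. A j)" using permutes_image[OF perm] by simp
    finally show ?thesis using A_Union by simp
  qed
  have Gbij: "bij_betw G (univ M) (univ M)" using G(2) A_Union un by simp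
  have Ginj: "inj_on G (univ M)" using Gbij by (simp add: bij_betw_def)
  have Gimg: "G ` A i = A (\<sigma> i)" if i: "i < k" for i
  proof -
    have "G ` A i = F i ` A i" using G(1) i by (intro image_cong) auto
    then show ?thesis using F i by (simp add: bij_betw_def)
  qed
  have Gpat: "G x \<in> A (\<sigma> i) \<longleftrightarrow> x \<in> A i" if x: "x \<in> univ M" and i: "i < k" for x i
  proof
    assume "x \<in> A i" then show "G x \<in> A (\<sigma> i)" using Gimg[OF i] by blast
  next
    assume g: "G x \<in> A (\<sigma> i)"
    obtain i0 where i0: "i0 < k" "x \<in> A i0" using A_cover x by blast
    then have "G x \<in> A (\<sigma> i0)" using Gimg[OF i0(1)] by blast
    then have "\<sigma> i0 = \<sigma> i" using disjD[OF A_disj sk[OF i0(1)] sk[OF i]] g by simp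
    then show "x \<in> A i" using sinj i0 by metis
  qed
  have "aut G"
  proof (rule aut_crit[OF Gbij])
    fix \<tau> ds assume ds: "distinct ds" "set ds \<subseteq> univ M" "length ds \<le> LL"
      and ok: "atom_ok Rels ar Cs (length ds) \<tau>"
    define D where "D = set ds"
    have fD: "finite D" "D \<subseteq> univ M" using ds by (auto simp: D_def)
    have cD: "card D \<le> KK + 1" using ds LL_le distinct_card unfolding D_def by fastforce
    have cap: "\<forall>l<k. nf \<le> l \<longrightarrow> card (D \<inter> A l) \<le> KK + 1"
    proof (intro allI impI)
      fix l assume "l < k" "nf \<le> l"
      have "card (D \<inter> A l) \<le> card D" by (rule card_mono) (use fD in auto)
      then show "card (D \<inter> A l) \<le> KK + 1" using cD by simp
    qed
    obtain h where h: "inj_on h D" "\<forall>x\<in>D. \<forall>l<k. x \<in> A l \<longrightarrow> h x \<in> Q l"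
      using ext_inj[OF Q _ fD cap] by auto
    have hpat: "h x \<in> Q l \<longleftrightarrow> x \<in> A l" if "x \<in> D" "l < k" for x l
      by (rule pat_iff[OF omD(2)[OF Q] _ _ A_disj \<open>l < k\<close>]) (use that fD A_cover h(2) in auto)
    have hn: "h x \<in> {1..n}" if x: "x \<in> D" for x
    proof -
      obtain l where "l < k" "x \<in> A l" using A_cover fD x by blast
      then show ?thesis using h(2) x omD(1)[OF Q] by blast
    qed
    let ?bs = "map h ds"
    have dbs: "distinct ?bs" by (rule distinct_map[THEN iffD2]) (use ds(1) h(1) D_def in simp)
    have sbs: "set ?bs \<subseteq> univ N" using hn uN D_def by auto
    have s1: "holds N \<tau> ?bs = holds M \<tau> ds"
    proof (rule cviaD[OF cQ])
      fix l j assume "l < k" "j < length ?bs"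
      then show "(?bs ! j \<in> Q l) = (ds ! j \<in> A l)" using hpat D_def by simp
    qed (use ok dbs ds sbs in auto)
    have dG: "distinct (map G ds)" by (rule distinct_map[THEN iffD2]) (use ds inj_on_subset[OF Ginj] in auto)
    have sG: "set (map G ds) \<subseteq> univ M" using ds Gbij by (auto simp: bij_betw_def)
    have s2: "holds N \<tau> ?bs = holds M \<tau> (map G ds)"
    proof (rule cviaD[OF cP])
      fix l j assume l: "l < k" and j: "j < length ?bs"
      define i where "i = inv \<sigma> l"
      have i: "i < k" "\<sigma> i = l" using permutes_in_image[OF permutes_inv[OF perm], of l] l
        permutes_inverses(1)[OF perm] by (auto simp: i_def)
      have dj: "ds ! j \<in> D" "ds ! j \<in> univ M" using j ds D_def by auto
      have "(?bs ! j \<in> P l) = (h (ds ! j) \<in> Q i)" using j QP i by simp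
      also have "\<dots> = (ds ! j \<in> A i)" using hpat[OF dj(1) i(1)] .
      also have "\<dots> = (G (ds ! j) \<in> A l)" using Gpat[OF dj(2) i(1)] i by simp
      finally show "(?bs ! j \<in> P l) = (map G ds ! j \<in> A l)" using j by simp
    qed (use ok dbs dG sG sbs in auto)
    show "holds M \<tau> ds = holds M \<tau> (map G ds)" using s1 s2 by simp
  qed
  then show ?thesis unfolding AutStar_def using perm Gimg by blast
qed

lemma omI:
  assumes "\<And>i. i < k \<Longrightarrow> Xs i \<subseteq> X"
    and "\<forall>i<k. \<forall>j<k. i \<noteq> j \<longrightarrow> Xs i \<inter> Xs j = {}"
    and "(\<Union>i<k. Xs i) = X"
    and "\<And>i. i < nf \<Longrightarrow> card (Xs i) = card (A i)"
    and "\<And>i. nf \<le> i \<Longrightarrow> i < k \<Longrightarrow> KK < card (Xs i)"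
    and "\<And>i. k \<le> i \<Longrightarrow> Xs i = {}"
  shows "Xs \<in> Omega Rels ar A k X"
  unfolding Omega_def mem_Collect_eq nf_def[symmetric] KK_def[symmetric]
  using assms by auto

lemma fiber_back:
  assumes Bs: "Bs \<in> Om n" and s: "\<sigma> \<in> AutStar Rels Cs M A k"
  shows "(\<lambda>i. Bs (\<sigma> i)) \<in> Om n \<and> Phi n (\<lambda>i. Bs (\<sigma> i)) = Phi n Bs"
proof -
  obtain f where perm: "\<sigma> permutes {..<k}" and f: "aut f" "\<forall>i<k. f ` A i = A (\<sigma> i)"
    using s unfolding AutStar_def by blast
  have sk: "\<sigma> i < k" if "i < k" for i using permutes_in_image[OF perm, of i] that by simp
  have sinj: "\<sigma> i = \<sigma> j \<Longrightarrow> i = j" for i j using permutes_inj[OF perm] by (simp add: inj_def)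
  have injf: "inj_on f (univ M)" using f(1) aut_bij bij_betw_def by blast
  have injA: "inj_on f (A i)" if "i < k" for i using inj_on_subset[OF injf A_sub[OF that]] .
  have om: "(\<lambda>i. Bs (\<sigma> i)) \<in> Om n"
  proof (rule omI)
    show "Bs (\<sigma> i) \<subseteq> {1..n}" if "i < k" for i using omD(1)[OF Bs sk[OF that]] .
    show "\<forall>i<k. \<forall>j<k. i \<noteq> j \<longrightarrow> Bs (\<sigma> i) \<inter> Bs (\<sigma> j) = {}"
    proof (intro allI impI)
      fix i j assume "i < k" "j < k" "i \<noteq> j"
      then have "\<sigma> i \<noteq> \<sigma> j" "\<sigma> i < k" "\<sigma> j < k" using sinj sk by auto
      then show "Bs (\<sigma> i) \<inter> Bs (\<sigma> j) = {}" using omD(2)[OF Bs] by simp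
    qed
    have "(\<Union>i<k. Bs (\<sigma> i)) = (\<Union>j\<in>\<sigma> ` {..<k}. Bs j)" by (simp add: image_image)
    also have "\<dots> = (\<Union>j<k. Bs j)" using permutes_image[OF perm] by simp
    finally show "(\<Union>i<k. Bs (\<sigma> i)) = {1..n}" using omD(3)[OF Bs] by simp
    show "card (Bs (\<sigma> i)) = card (A i)" if i: "i < nf" for i
    proof -
      have ik: "i < k" using i nf_le by simp
      have fi: "finite (A i)" using fin_iff[OF ik] i by simp
      have c: "card (A (\<sigma> i)) = card (A i)" using f(2) ik card_image[OF injA[OF ik]] by simp
      have "finite (A (\<sigma> i))" using f(2) ik fi by (metis finite_imageI)
      then have "\<sigma> i < nf" using fin_iff[OF sk[OF ik]] by simp
      then show ?thesis using omD(4)[OF Bs] c by simp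
    qed
    show "KK < card (Bs (\<sigma> i))" if i: "nf \<le> i" "i < k" for i
    proof -
      have fi: "infinite (A i)" using fin_iff[OF i(2)] i by simp
      have "infinite (A (\<sigma> i))" using f(2) i(2) fi finite_image_iff[OF injA[OF i(2)]] by simp
      then have "\<not> \<sigma> i < nf" using fin_iff[OF sk[OF i(2)]] by simp
      then show ?thesis using omD(5)[OF Bs] sk[OF i(2)] by simp
    qed
    show "Bs (\<sigma> i) = {}" if "k \<le> i" for i
      using permutes_not_in[OF perm, of i] that omD(6)[OF Bs] by simp
  qed
  have cv: "cvia (Phi n Bs) (\<lambda>i. Bs (\<sigma> i))"
    unfolding cvia_def
  proof (intro allI impI, elim conjE)
    fix \<tau> bs as
    assume ok: "atom_ok Rels ar Cs (length bs) \<tau>" and len: "length as = length bs"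
      and dbs: "distinct bs" and das: "distinct as" and bsN: "set bs \<subseteq> univ (Phi n Bs)"
      and asM: "set as \<subseteq> univ M" and pat: "\<forall>i<k. \<forall>j<length bs. (bs ! j \<in> Bs (\<sigma> i)) = (as ! j \<in> A i)"
    have d2: "distinct (map f as)" by (rule distinct_map[THEN iffD2]) (use das inj_on_subset[OF injf asM] in auto)
    have s2: "set (map f as) \<subseteq> univ M" using asM f(1) aut_bij by (auto simp: bij_betw_def)
    have "holds (Phi n Bs) \<tau> bs = holds M \<tau> (map f as)"
    proof (rule cviaD[OF Phi_cvia[OF Bs]])
      fix l j assume l: "l < k" and j: "j < length bs"
      define i where "i = inv \<sigma> l"
      have i: "i < k" "\<sigma> i = l" using permutes_in_image[OF permutes_inv[OF perm], of l] l
        permutes_inverses(1)[OF perm] by (auto simp: i_def)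
      have aj: "as ! j \<in> univ M" using asM j len by (metis nth_mem subsetD)
      have "(bs ! j \<in> Bs l) = (as ! j \<in> A i)" using pat i j by metis
      also have "\<dots> = (f (as ! j) \<in> f ` A i)" using inj_on_image_mem_iff[OF injf aj A_sub[OF i(1)]] by simp
      also have "\<dots> = (f (as ! j) \<in> A l)" using f(2) i by simp
      finally show "(bs ! j \<in> Bs l) = (map f as ! j \<in> A l)" using j len by simp
    qed (use ok len dbs d2 bsN s2 in auto)
    also have "\<dots> = holds M \<tau> as" by (rule holds_aut[OF f(1) _ asM]) (use ok len in simp)
    finally show "holds (Phi n Bs) \<tau> bs = holds M \<tau> as" .
  qed
  have "Phi n Bs = Phi n (\<lambda>i. Bs (\<sigma> i))"
    by (rule cvia_unique[OF om Phi_wf[OF Bs] _ cv]) (simp add: Phi_simps)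
  then show ?thesis using om by simp
qed

lemma AutStar_fin: "finite (AutStar Rels Cs M A k)"
proof -
  have "AutStar Rels Cs M A k \<subseteq> {p. p permutes {..<k}}" unfolding AutStar_def by blast
  then show ?thesis using finite_permutations[of "{..<k}"] finite_subset by blast
qed

lemma AutStar_id: "id \<in> AutStar Rels Cs M A k"
  unfolding AutStar_def using aut_id by auto

lemma AutStar_inj:
  assumes Bs: "Bs \<in> Om n"
  shows "inj_on (\<lambda>\<sigma>. (\<lambda>i. Bs (\<sigma> i))) (AutStar Rels Cs M A k)"
proof (rule inj_onI)
  fix \<sigma> \<sigma>' assume s: "\<sigma> \<in> AutStar Rels Cs M A k" and s': "\<sigma>' \<in> AutStar Rels Cs M A k"
    and e: "(\<lambda>i. Bs (\<sigma> i)) = (\<lambda>i. Bs (\<sigma>' i))"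
  have p: "\<sigma> permutes {..<k}" "\<sigma>' permutes {..<k}" using s s' unfolding AutStar_def by auto
  show "\<sigma> = \<sigma>'"
  proof
    fix i show "\<sigma> i = \<sigma>' i"
    proof (cases "i < k")
      case True
      have k1: "\<sigma> i < k" "\<sigma>' i < k" using permutes_in_image[OF p(1), of i] permutes_in_image[OF p(2), of i] True by auto
      have eq: "Bs (\<sigma> i) = Bs (\<sigma>' i)" using e by metis
      have "Bs (\<sigma> i) \<noteq> {}" using om_ne[OF Bs _ k1(1)] by simp
      then obtain x where x: "x \<in> Bs (\<sigma> i)" by blast
      then have "x \<in> Bs (\<sigma>' i)" using eq by simp
      then show ?thesis using disjD[OF omD(2)[OF Bs] k1(1) k1(2) x] by simp
    next
      case False
      then show ?thesis using permutes_not_in[OF p(1)] permutes_not_in[OF p(2)] by simp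
    qed
  qed
qed

lemma fiber:
  assumes Bs: "Bs \<in> Om n"
  shows "{Bs' \<in> Om n. Phi n Bs' = Phi n Bs} = (\<lambda>\<sigma>. (\<lambda>i. Bs (\<sigma> i))) ` AutStar Rels Cs M A k"
proof
  show "(\<lambda>\<sigma>. (\<lambda>i. Bs (\<sigma> i))) ` AutStar Rels Cs M A k \<subseteq> {Bs' \<in> Om n. Phi n Bs' = Phi n Bs}"
    using fiber_back[OF Bs] by blast
next
  show "{Bs' \<in> Om n. Phi n Bs' = Phi n Bs} \<subseteq> (\<lambda>\<sigma>. (\<lambda>i. Bs (\<sigma> i))) ` AutStar Rels Cs M A k"
  proof
    fix Bs' assume "Bs' \<in> {Bs' \<in> Om n. Phi n Bs' = Phi n Bs}"
    then have Bs': "Bs' \<in> Om n" and e: "Phi n Bs' = Phi n Bs" by auto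
    let ?N = "Phi n Bs"
    have wfN: "wf_struc Rels ar Cs ?N" by (rule Phi_wf[OF Bs])
    have uN: "univ ?N = {1..n}" by (simp add: Phi_simps)
    have cP: "cvia ?N Bs" by (rule Phi_cvia[OF Bs])
    have cQ: "cvia ?N Bs'" using Phi_cvia[OF Bs'] e by simp
    obtain \<sigma> where perm: "\<sigma> permutes {..<k}" and QP: "\<forall>i. Bs' i = Bs (\<sigma> i)"
      using sigma_ex[OF Bs Bs' wfN uN cP cQ] by blast
    have "\<sigma> \<in> AutStar Rels Cs M A k" by (rule stepB[OF Bs Bs' wfN uN cP cQ perm QP])
    moreover have "Bs' = (\<lambda>i. Bs (\<sigma> i))" using QP by (simp add: fun_eq_iff)
    ultimately show "Bs' \<in> (\<lambda>\<sigma>. (\<lambda>i. Bs (\<sigma> i))) ` AutStar Rels Cs M A k" by blast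
  qed
qed

lemma Om_finite: "finite (Om n)"
proof -
  have "Om n \<subseteq> {f. \<forall>x. (x \<in> {..<k} \<longrightarrow> f x \<in> Pow {1..n}) \<and> (x \<notin> {..<k} \<longrightarrow> f x = {})}"
  proof
    fix Xs assume X: "Xs \<in> Om n"
    have "\<forall>x. (x \<in> {..<k} \<longrightarrow> Xs x \<in> Pow {1..n}) \<and> (x \<notin> {..<k} \<longrightarrow> Xs x = {})"
    proof (intro allI conjI impI)
      fix x assume "x \<in> {..<k}" then show "Xs x \<in> Pow {1..n}" using omD(1)[OF X] by simp
    next
      fix x assume "x \<notin> {..<k}" then show "Xs x = {}" using omD(6)[OF X] by simp
    qed
    then show "Xs \<in> {f. \<forall>x. (x \<in> {..<k} \<longrightarrow> f x \<in> Pow {1..n}) \<and> (x \<notin> {..<k} \<longrightarrow> f x = {})}" by simp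
  qed
  moreover have "finite {f. \<forall>x. (x \<in> {..<k} \<longrightarrow> f x \<in> Pow {1..n}) \<and> (x \<notin> {..<k} \<longrightarrow> f x = ({}::nat set))}"
    by (rule finite_set_of_finite_funs) auto
  ultimately show ?thesis using finite_subset by blast
qed

lemma count:
  assumes H: "hereditary Rels ar Cs H" and MH: "M \<in> H"
  shows "real (card {N \<in> Hn H n. compatible Rels ar Cs M A k N}) =
    real (card (Om n)) / real (card (AutStar Rels Cs M A k))"
proof -
  have set_eq: "{N \<in> Hn H n. compatible Rels ar Cs M A k N} = Phi n ` Om n"
  proof
    show "{N \<in> Hn H n. compatible Rels ar Cs M A k N} \<subseteq> Phi n ` Om n"
    proof
      fix N assume "N \<in> {N \<in> Hn H n. compatible Rels ar Cs M A k N}"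
      then have NH: "N \<in> H" and uN: "univ N = {1..n}" and c: "compatible Rels ar Cs M A k N"
        by (auto simp: Hn_def)
      obtain Bs where Bs: "Bs \<in> Omega Rels ar A k (univ N)" and cv: "cvia N Bs"
        using c compatible_iff by blast
      have Bs': "Bs \<in> Om n" using Bs uN by simp
      have wfN: "wf_struc Rels ar Cs N" using H NH unfolding hereditary_def by blast
      have "N = Phi n Bs" by (rule cvia_unique[OF Bs' wfN uN cv])
      then show "N \<in> Phi n ` Om n" using Bs' by blast
    qed
  next
    show "Phi n ` Om n \<subseteq> {N \<in> Hn H n. compatible Rels ar Cs M A k N}"
    proof
      fix N assume "N \<in> Phi n ` Om n"
      then obtain Bs where Bs: "Bs \<in> Om n" and N: "N = Phi n Bs" by blast
      have "N \<in> H" using Phi_in_H[OF Bs H MH] N by simp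
      moreover have "univ N = {1..n}" using N by (simp add: Phi_simps)
      moreover have "compatible Rels ar Cs M A k N"
        unfolding compatible_iff using Bs Phi_cvia[OF Bs] N by (auto simp: Phi_simps)
      ultimately show "N \<in> {N \<in> Hn H n. compatible Rels ar Cs M A k N}" by (simp add: Hn_def)
    qed
  qed
  have "card (Om n) = card (Phi n ` Om n) * card (AutStar Rels Cs M A k)"
  proof (rule card_fibers[OF Om_finite])
    fix y assume "y \<in> Phi n ` Om n"
    then obtain Bs where Bs: "Bs \<in> Om n" and y: "y = Phi n Bs" by blast
    have "{x \<in> Om n. Phi n x = y} = (\<lambda>\<sigma>. (\<lambda>i. Bs (\<sigma> i))) ` AutStar Rels Cs M A k"
      using fiber[OF Bs] y by simp
    then show "card {x \<in> Om n. Phi n x = y} = card (AutStar Rels Cs M A k)"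
      using card_image[OF AutStar_inj[OF Bs]] by simp
  qed
  moreover have "card (AutStar Rels Cs M A k) > 0"
    using AutStar_fin AutStar_id card_gt_0_iff by blast
  ultimately show ?thesis using set_eq by simp
qed

end

theorem mainTheorem5:
  fixes Rels :: "'r set" and ar :: "'r \<Rightarrow> nat" and Cs :: "'c set"
    and H :: "('r,'c) struc set" and M :: "('r,'c) struc"
    and A :: "nat \<Rightarrow> nat set" and k :: nat
  assumes "finite Rels" and "finite Cs"
    and "hereditary Rels ar Cs H" and "nontrivial H" and "basic Rels Cs H"
    and "M \<in> H" and "infinite (univ M)"
    and "class_enum Rels Cs M A k"
  shows "\<exists>n0. \<forall>n\<ge>n0.
    real (card {N \<in> Hn H n. compatible Rels ar Cs M A k N}) =
    real (card (Omega Rels ar A k {1..n})) / real (card (AutStar Rels Cs M A k))"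
proof -
  have wfM: "wf_struc Rels ar Cs M" using assms(3,6) unfolding hereditary_def by blast
  interpret cx Rels ar Cs M A k
    by (unfold_locales) (use assms(1,8) wfM in auto)
  show ?thesis using count[OF assms(3,6)] by blast
qed



end
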